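(* Fix $\alpha>0$. Consider the model, estimator and conditions in the context. Assume (A0)–(A6) and $\mathbf A_0(\Theta)$ hold, the moment condition (M) holds with some $\epsilon>2$, and there is $\gamma>1$ with $\alpha_k^{(0)}=\mathcal O(k^{-\gamma})$ and $\sum_{k\ge1}k^{-\gamma}\max(\bar\varphi_k,\bar\psi_k)<\infty$. Then $\big\|\widehat H_{\alpha,n}(\theta)-H_{\alpha,n}(\theta)\big\|_\Theta\to0$ almost surely as $n\to\infty$.
   Context: Model. Let $\{Y_t,t\in\mathbb Z\}$ be an $\mathbb N_0$-valued time series and $X_t\in\mathbb R^{d_x}$ covariates, $\mathcal F_{t-1}=\sigma\{Y_{t-1},\dots;X_{t-1},\dots\}$. For $\theta$ in a compact $\Theta\subset\mathbb R^d$, $\lambda_t(\theta)=f_\theta(Y_{t-1},Y_{t-2},\dots;X_{t-1},X_{t-2},\dots)$ with $f_\theta$ a known (up to $\theta$) measurable non-negative function on $\mathbb N_0^{\mathbb N}\times(\mathbb R^{d_x})^{\mathbb N}$. Conditionally on $\mathcal F_{t-1}$, $Y_t$ has pmf $g(\cdot\mid\eta_t)$ on $\mathbb N_0$ with $\eta_t=\eta(\lambda_t(\theta^* ))$, $\theta^*\in\Theta$ the true parameter, $\mathbb E(Y_t\mid\mathcal F_{t-1})=\lambda_t(\theta^* )$; $\eta_t(\theta)=\eta(\lambda_t(\theta))$. The $Y_t$ are identically distributed and the support of $g(\cdot\mid\eta_t(\theta))$ does not depend on $\theta$. There is a stationary ergodic solution $(Y_t,\lambda_t,X_t)$. Norms: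 $\|x\|=\sup_i|x_i|$; $\|f\|_\Theta=\sup_{\theta\in\Theta}\|f(\theta)\|$; $\|Z\|_r=(\mathbb E\|Z\|^r)^{1/r}$. Moment condition (M) with $\epsilon$: $\exists C>0$, $\mathbb E\|(Y_t,\lambda_t,X_t)\|^{1+\epsilon}<C$ for all $t$. Estimator: $\widehat\lambda_t(\theta)=f_\theta(Y_{t-1},\dots,Y_1,0,\dots;X_{t-1},\dots,X_1,0,\dots)$, $\widehat\eta_t(\theta)=\eta(\widehat\lambda_t(\theta))$; $\ell_{\alpha,t}(\theta)=\sum_{y\ge0}g(y\mid\eta_t(\theta))^{1+\alpha}-(1+\frac1\alpha)g(Y_t\mid\eta_t(\theta))^\alpha$, $\widehat\ell_{\alpha,t}$ likewise with $\widehat\eta_t(\theta)$; $H_{\alpha,n}=\frac1n\sum_{t=1}^n\ell_{\alpha,t}$, $\widehat H_{\alpha,n}=\frac1n\sum_{t=1}^n\widehat\ell_{\alpha,t}$. $\mathbf A_0(\Theta)$: $\theta\mapsto f_\theta(y,x)$ continuous, $\|f_\theta(0)\|_\Theta<\infty$, and there are non-negative $\alpha_k^{(0)}$, $\sum_k\alpha_k^{(0)}<1$, with $\|f_\theta(y,x)-f_\theta(y',x')\|_\Theta\le\sum_{k\ge1}\alpha_k^{(0)}(|y_k-y'_k|+\|x_k-x'_k\|)$. (A0): $f_\theta(Y_{t-1},\dots;X_{t-1},\dots)=f_{\theta'}(Y_{t-1},\dots;X_{t-1},\dots)$ a.s. for some $t$ implies $\theta=\theta'$; $\exists\underline c>0$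 with $\inf_\theta f_\theta(y,x)\ge\underline c$ for all $(y,x)$. (A1): $\theta^*$ is interior to $\Theta$. (A2): $\mathbb E\|\lambda_t(\theta)\|_\Theta^4=\underline\lambda<\infty$ for all $t\ge1$. (A3): $\eta\mapsto g(y\mid\eta)$ is $C^2$ on $\mathbb R$ for each $y$, and $g(\cdot\mid\eta)=g(\cdot\mid\eta')$ implies $\eta=\eta'$. (A4): $\varphi(\eta)=\sum_{y\ge0}|\partial g(y\mid\eta)/\partial\eta|$ is well defined on $\mathbb R$ and for all $t\ge1$ there is $\bar\varphi_t>0$ with $\sup_{0\le\delta\le1}\|\,\|\varphi(\delta\eta_t(\theta)+(1-\delta)\widehat\eta_t(\theta))\|_\Theta\|_2\le\bar\varphi_t<\infty$. (A5): $\psi(\eta)=|g(Y_t\mid\eta)^{-1}\partial g(Y_t\mid\eta)/\partial\eta|$ is well defined on $\mathbb R$ and for all $t\ge1$ there is $\bar\psi_t>0$ with $\sup_{0\le\delta\le1}\|\,\|\psi(\delta\eta_t(\theta)+(1-\delta)\widehat\eta_t(\theta))\|_\Theta\|_2\le\bar\psi_t<\infty$. (A6): $\eta$ on $[\underline c,\infty)$ is Lipschitz with some constant $c_\eta>0$ and injective. *)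

theory Defs
  imports "HOL-Probability.Probability" "HOL-Library.Landau_Symbols"
begin

definition supn :: "real ^ 'e \<Rightarrow> real" where
  "supn x = Max (range (\<lambda>i. \<bar>x $ i\<bar>))"

definition past_sigma :: "'w measure \<Rightarrow> (int \<Rightarrow> 'w \<Rightarrow> nat) \<Rightarrow> (int \<Rightarrow> 'w \<Rightarrow> real ^ 'e) \<Rightarrow> int \<Rightarrow> 'w measure" where
  "past_sigma M Y X s = sigma (space M)
     (\<Union>u\<in>{..s}. {Y u -` A \<inter> space M | A. True} \<union> {X u -` B \<inter> space M | B. B \<in> sets borel})"

definition stationary_ergodic :: "'w measure \<Rightarrow> 'b measure \<Rightarrow> (int \<Rightarrow> 'w \<Rightarrow> 'b) \<Rightarrow> bool" where
  "stationary_ergodic M N Z \<longleftrightarrow>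
     (\<lambda>w t. Z t w) \<in> M \<rightarrow>\<^sub>M PiM UNIV (\<lambda>_. N) \<and>
     distr M (PiM UNIV (\<lambda>_. N)) (\<lambda>w t. Z (t + 1) w) = distr M (PiM UNIV (\<lambda>_. N)) (\<lambda>w t. Z t w) \<and>
     (\<forall>A \<in> sets (PiM UNIV (\<lambda>_. N)).
        (\<lambda>z t. z (t + 1)) -` A \<inter> space (PiM UNIV (\<lambda>_. N)) = A \<longrightarrow>
        measure M {w \<in> space M. (\<lambda>t. Z t w) \<in> A} \<in> {0, 1})"

text \<open>lambda_t(theta) = f_theta(Y_{t-1},Y_{t-2},...; X_{t-1},...). Sequence entry k is lag k+1.\<close>
definition lam :: "('th \<Rightarrow> (nat \<Rightarrow> nat) \<Rightarrow> (nat \<Rightarrow> real ^ 'e) \<Rightarrow> real) \<Rightarrow> (int \<Rightarrow> 'w \<Rightarrow> nat)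
      \<Rightarrow> (int \<Rightarrow> 'w \<Rightarrow> real ^ 'e) \<Rightarrow> int \<Rightarrow> 'th \<Rightarrow> 'w \<Rightarrow> real" where
  "lam f Y X t th w = f th (\<lambda>k. Y (t - 1 - int k) w) (\<lambda>k. X (t - 1 - int k) w)"

definition lamhat :: "('th \<Rightarrow> (nat \<Rightarrow> nat) \<Rightarrow> (nat \<Rightarrow> real ^ 'e) \<Rightarrow> real) \<Rightarrow> (int \<Rightarrow> 'w \<Rightarrow> nat)
      \<Rightarrow> (int \<Rightarrow> 'w \<Rightarrow> real ^ 'e) \<Rightarrow> int \<Rightarrow> 'th \<Rightarrow> 'w \<Rightarrow> real" where
  "lamhat f Y X t th w = f th (\<lambda>k. if int k < t - 1 then Y (t - 1 - int k) w else 0)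
                               (\<lambda>k. if int k < t - 1 then X (t - 1 - int k) w else 0)"

definition dpd :: "(nat \<Rightarrow> real \<Rightarrow> real) \<Rightarrow> real \<Rightarrow> nat \<Rightarrow> real \<Rightarrow> real" where
  "dpd g a y0 e = (\<Sum>y. g y e powr (1 + a)) - (1 + 1 / a) * g y0 e powr a"

definition Hn :: "(nat \<Rightarrow> real \<Rightarrow> real) \<Rightarrow> real \<Rightarrow> (int \<Rightarrow> 'w \<Rightarrow> nat) \<Rightarrow> (int \<Rightarrow> 'th \<Rightarrow> 'w \<Rightarrow> real)
      \<Rightarrow> nat \<Rightarrow> 'th \<Rightarrow> 'w \<Rightarrow> real" where
  "Hn g a Y eta_t n th w = (\<Sum>t = 1..n. dpd g a (Y (int t) w) (eta_t (int t) th w)) / real n"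

definition phi_fun :: "(nat \<Rightarrow> real \<Rightarrow> real) \<Rightarrow> real \<Rightarrow> real" where
  "phi_fun g e = (\<Sum>y. \<bar>deriv (g y) e\<bar>)"

definition psi_fun :: "(nat \<Rightarrow> real \<Rightarrow> real) \<Rightarrow> nat \<Rightarrow> real \<Rightarrow> real" where
  "psi_fun g y0 e = \<bar>inverse (g y0 e) * deriv (g y0) e\<bar>"

end

theory Submission
  imports Defs
begin
lemma ftc_bound:
  fixes h h' :: "real \<Rightarrow> real"
  assumes hd: "\<And>e. (h has_real_derivative h' e) (at e)" and hc: "continuous_on UNIV h'"
  shows "ennreal \<bar>h v - h u\<bar> \<le> ennreal \<bar>v - u\<bar> *
     (\<integral>\<^sup>+ \<delta>. ennreal \<bar>h' (\<delta> * v + (1-\<delta>) * u)\<bar> * indicator {0..1} \<delta> \<partial>lborel)"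
proof -
  define F where "F \<delta> = h (\<delta> * v + (1-\<delta>) * u)" for \<delta>
  define F' where "F' \<delta> = h' (\<delta> * v + (1-\<delta>) * u) * (v - u)" for \<delta>
  have dF: "(F has_real_derivative F' \<delta>) (at \<delta>)" for \<delta>
    unfolding F_def F'_def
    by (rule DERIV_chain2[OF hd]) (auto intro!: derivative_eq_intros)
  have cF': "continuous_on {0..1} F'"
    unfolding F'_def by (intro continuous_intros continuous_on_compose2[OF hc]) auto
  have cA: "continuous_on {0..1} (\<lambda>\<delta>. \<bar>h' (\<delta> * v + (1-\<delta>) * u)\<bar>)"
    by (intro continuous_intros continuous_on_compose2[OF hc]) auto
  have I: "(F' has_integral (F 1 - F 0)) {0..1}"
    by (rule fundamental_theorem_of_calculus)
       (auto intro!: has_field_derivative_at_within dF simp: has_real_derivative_iff_has_vector_derivative[symmetric])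
  have iA: "((\<lambda>\<delta>. \<bar>h' (\<delta> * v + (1-\<delta>) * u)\<bar>) has_integral integral {0..1} (\<lambda>\<delta>. \<bar>h' (\<delta> * v + (1-\<delta>) * u)\<bar>)) {0..1}"
    using integrable_continuous_real[OF cA] by (simp add: has_integral_integral)
  have "\<bar>F 1 - F 0\<bar> = \<bar>integral {0..1} F'\<bar>" using I by (simp add: integral_unique)
  also have "\<dots> \<le> integral {0..1} (\<lambda>\<delta>. \<bar>v - u\<bar> * \<bar>h' (\<delta> * v + (1-\<delta>) * u)\<bar>)"
    using Henstock_Kurzweil_Integration.integral_norm_bound_integral[of F' "{0..1}" "\<lambda>\<delta>. \<bar>v - u\<bar> * \<bar>h' (\<delta> * v + (1-\<delta>) * u)\<bar>"]
      integrable_continuous_real[OF cF'] integrable_continuous_real[OF continuous_on_mult[OF continuous_on_const cA, of "\<bar>v - u\<bar>"]]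
    by (auto simp: F'_def abs_mult)
  also have "\<dots> = \<bar>v - u\<bar> * integral {0..1} (\<lambda>\<delta>. \<bar>h' (\<delta> * v + (1-\<delta>) * u)\<bar>)"
    by simp
  finally have 1: "\<bar>h v - h u\<bar> \<le> \<bar>v - u\<bar> * integral {0..1} (\<lambda>\<delta>. \<bar>h' (\<delta> * v + (1-\<delta>) * u)\<bar>)"
    by (simp add: F_def)
  have 2: "(\<integral>\<^sup>+ \<delta>. ennreal \<bar>h' (\<delta> * v + (1-\<delta>) * u)\<bar> * indicator {0..1} \<delta> \<partial>lborel)
      = ennreal (integral {0..1} (\<lambda>\<delta>. \<bar>h' (\<delta> * v + (1-\<delta>) * u)\<bar>))"
    by (rule nn_integral_has_integral_lebesgue'[OF _ iA]) auto
  have 3: "integral {0..1} (\<lambda>\<delta>. \<bar>h' (\<delta> * v + (1-\<delta>) * u)\<bar>) \<ge> 0"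
    by (rule integral_nonneg) (auto intro: integrable_continuous_real[OF cA])
  show ?thesis unfolding 2 using 1 3
    by (simp add: ennreal_mult[symmetric] ennreal_leI)
qed

lemma powr_lip:
  fixes x y p :: real
  assumes "0 \<le> x" "x \<le> 1" "0 \<le> y" "y \<le> 1" "1 \<le> p"
  shows "\<bar>x powr p - y powr p\<bar> \<le> p * \<bar>x - y\<bar>"
proof -
  have main: "b powr p - c powr p \<le> p * (b - c)" if "0 \<le> c" "c < b" "b \<le> 1" for b c :: real
  proof -
    have cont: "continuous_on {c..b} (\<lambda>z. z powr p)"
      using that assms by (intro continuous_on_powr') (auto intro!: continuous_on_id continuous_on_const)
    have "(\<lambda>z. z powr p) differentiable (at z)" if "c < z" "z < b" for z
      using that \<open>0 \<le> c\<close> unfolding real_differentiable_def by (auto intro!: derivative_eq_intros exI)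
    from MVT[OF \<open>c < b\<close> cont this] obtain l z where z: "c < z" "z < b" and dz: "DERIV (\<lambda>z. z powr p) z :> l"
      and eq: "b powr p - c powr p = (b - c) * l" by blast
    have "DERIV (\<lambda>z. z powr p) z :> p * z powr (p - 1)"
      using z that by (auto intro!: derivative_eq_intros)
    then have l: "l = p * z powr (p - 1)" using dz DERIV_unique by blast
    have "z powr (p - 1) \<le> 1" using z that assms by (intro powr_le1) auto
    then have "l \<le> p" using l assms by (simp add: mult_left_le)
    then show ?thesis using eq that by (simp add: mult_left_mono mult.commute)
  qed
  show ?thesis
  proof (cases "x = y")
    case False
    show ?thesis
    proof (cases "y < x")
      case True
      have "0 \<le> x powr p - y powr p" using True assms by (intro diff_ge_0_iff_ge[THEN iffD2] powr_mono2) auto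
      then show ?thesis using main[of y x] True assms by auto
    next
      case False
      then have "x < y" using \<open>x \<noteq> y\<close> by auto
      have "0 \<le> y powr p - x powr p" using \<open>x < y\<close> assms by (intro diff_ge_0_iff_ge[THEN iffD2] powr_mono2) auto
      then show ?thesis using main[of x y] \<open>x < y\<close> assms by auto
    qed
  qed simp
qed

lemma deriv_zero_at_zero:
  fixes G G1 :: "real \<Rightarrow> real"
  assumes "\<And>e. 0 \<le> G e" "\<And>e. (G has_real_derivative G1 e) (at e)" "G e = 0"
  shows "G1 e = 0"
  by (rule DERIV_local_min[OF assms(2)[of e], of 1]) (use assms in auto)

lemma enn_le_enn2real: "ennreal x \<le> y \<Longrightarrow> y \<noteq> \<top> \<Longrightarrow> 0 \<le> x \<Longrightarrow> x \<le> enn2real y"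
  by (cases y) auto

lemma enn2real_le_enn: "x \<le> enn2real y \<Longrightarrow> y \<noteq> \<top> \<Longrightarrow> ennreal x \<le> y"
  by (cases y) (auto simp: ennreal_leI)

lemma pow_psi_bound:
  fixes G G1 :: "real \<Rightarrow> real" and a u v :: real
  assumes G0: "\<And>e. 0 \<le> G e" and G1: "\<And>e. G e \<le> 1"
    and Gd: "\<And>e. (G has_real_derivative G1 e) (at e)" and Gc: "continuous_on UNIV G1" and a: "a > 0"
  shows "ennreal \<bar>G v powr a - G u powr a\<bar> \<le> ennreal (a * 2 powr a * \<bar>v - u\<bar>) *
     (\<integral>\<^sup>+ \<delta>. ennreal \<bar>inverse (G (\<delta> * v + (1-\<delta>) * u)) * G1 (\<delta> * v + (1-\<delta>) * u)\<bar> * indicator {0..1} \<delta> \<partial>lborel)"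
    (is "_ \<le> ennreal ?c * ?R")
proof -
  have GC: "continuous_on UNIV G"
    by (metis DERIV_isCont Gd continuous_at_imp_continuous_on)
  have zero: "G1 e = 0" if "G e = 0" for e
    using deriv_zero_at_zero[of G G1 e] G0 Gd that by blast
  have [measurable]: "G \<in> borel_measurable borel" "G1 \<in> borel_measurable borel"
    using GC Gc by (auto intro: borel_measurable_continuous_onI)
  have meas: "(\<lambda>\<delta>. ennreal \<bar>inverse (G (\<delta> * v + (1-\<delta>) * u)) * G1 (\<delta> * v + (1-\<delta>) * u)\<bar> * indicator {0..1} \<delta>)
     \<in> borel_measurable lborel"
    by measurable
  have eps: "\<bar>(G v + \<epsilon>) powr a - (G u + \<epsilon>) powr a\<bar> \<le> enn2real (ennreal ?c * ?R)"
    if e: "0 < \<epsilon>" "\<epsilon> \<le> 1" and fin: "ennreal ?c * ?R \<noteq> \<top>" for \<epsilon> :: real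
  proof -
    define h' where "h' e = a * (G e + \<epsilon>) powr (a - 1) * G1 e" for e
    have pos: "G e + \<epsilon> > 0" for e using G0[of e] e by linarith
    have hd: "((\<lambda>e. (G e + \<epsilon>) powr a) has_real_derivative h' e) (at e)" for e
      unfolding h'_def using pos[of e]
      by (auto intro!: derivative_eq_intros Gd simp: powr_diff field_simps)
    have hc: "continuous_on UNIV h'"
      unfolding h'_def using pos[THEN less_imp_neq]
      by (intro continuous_intros GC Gc) auto
    have bd: "\<bar>h' e\<bar> \<le> a * 2 powr a * \<bar>inverse (G e) * G1 e\<bar>" for e
    proof (cases "G e = 0")
      case True then show ?thesis using zero[OF True] by (simp add: h'_def)
    next
      case False
      then have Gp: "G e > 0" using G0[of e] by auto
      have "(G e + \<epsilon>) powr (a - 1) = (G e + \<epsilon>) powr a / (G e + \<epsilon>)"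
        using pos[of e] by (simp add: powr_diff)
      also have "\<dots> \<le> 2 powr a / G e"
      proof (rule frac_le)
        show "(G e + \<epsilon>) powr a \<le> 2 powr a" using G1[of e] e pos[of e] a by (intro powr_mono2) auto
      qed (use Gp e in auto)
      finally have "(G e + \<epsilon>) powr (a - 1) \<le> 2 powr a / G e" .
      then have "a * (G e + \<epsilon>) powr (a - 1) * \<bar>G1 e\<bar> \<le> a * (2 powr a / G e) * \<bar>G1 e\<bar>"
        using a by (intro mult_right_mono mult_left_mono) auto
      then show ?thesis using Gp a by (simp add: h'_def abs_mult field_simps)
    qed
    have "ennreal \<bar>(G v + \<epsilon>) powr a - (G u + \<epsilon>) powr a\<bar> \<le> ennreal \<bar>v - u\<bar> *
       (\<integral>\<^sup>+ \<delta>. ennreal \<bar>h' (\<delta> * v + (1-\<delta>) * u)\<bar> * indicator {0..1} \<delta> \<partial>lborel)"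
      by (rule ftc_bound[OF hd hc])
    also have "\<dots> \<le> ennreal \<bar>v - u\<bar> * (\<integral>\<^sup>+ \<delta>. ennreal (a * 2 powr a) * (ennreal \<bar>inverse (G (\<delta> * v + (1-\<delta>) * u)) * G1 (\<delta> * v + (1-\<delta>) * u)\<bar> * indicator {0..1} \<delta>) \<partial>lborel)"
    proof (intro mult_left_mono nn_integral_mono)
      fix x
      have "ennreal \<bar>h' (x * v + (1-x) * u)\<bar> \<le> ennreal (a * 2 powr a * \<bar>inverse (G (x * v + (1-x) * u)) * G1 (x * v + (1-x) * u)\<bar>)"
        by (rule ennreal_leI[OF bd])
      also have "\<dots> = ennreal (a * 2 powr a) * ennreal \<bar>inverse (G (x * v + (1-x) * u)) * G1 (x * v + (1-x) * u)\<bar>"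
        using a by (simp add: ennreal_mult)
      finally show "ennreal \<bar>h' (x * v + (1-x) * u)\<bar> * indicator {0..1} x \<le> ennreal (a * 2 powr a) * (ennreal \<bar>inverse (G (x * v + (1-x) * u)) * G1 (x * v + (1-x) * u)\<bar> * indicator {0..1} x)"
        by (auto simp: indicator_def)
    qed simp
    also have "\<dots> = ennreal \<bar>v - u\<bar> * (ennreal (a * 2 powr a) * ?R)"
      by (simp only: nn_integral_cmult[OF meas])
    also have "\<dots> = ennreal ?c * ?R"
    proof -
      have "ennreal ?c = ennreal (a * 2 powr a) * ennreal \<bar>v - u\<bar>"
        using a by (intro ennreal_mult) auto
      then show ?thesis by (simp add: mult_ac)
    qed
    finally show ?thesis using fin by (intro enn_le_enn2real) auto
  qed
  show ?thesis
  proof (cases "ennreal ?c * ?R = \<top>")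
    case True then show ?thesis by simp
  next
    case False
    have lim: "((\<lambda>\<epsilon>. \<bar>(G v + \<epsilon>) powr a - (G u + \<epsilon>) powr a\<bar>) \<longlongrightarrow> \<bar>G v powr a - G u powr a\<bar>) (at_right 0)"
    proof -
      have l1: "((\<lambda>\<epsilon>. (G x + \<epsilon>) powr a) \<longlongrightarrow> G x powr a) (at_right 0)" for x
      proof (rule tendsto_powr')
        show "((\<lambda>\<epsilon>. G x + \<epsilon>) \<longlongrightarrow> G x) (at_right 0)"
          using tendsto_add[OF tendsto_const[of "G x"] tendsto_ident_at[of 0 "{0<..}"]] by simp
        show "G x \<noteq> 0 \<or> 0 < a \<and> (\<forall>\<^sub>F \<epsilon> in at_right 0. 0 \<le> G x + \<epsilon>)"
          using a G0[of x] by (auto simp: eventually_at_right_less intro: eventually_mono[OF eventually_at_right_less])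
      qed auto
      show ?thesis by (intro tendsto_rabs tendsto_diff l1)
    qed
    have "\<bar>G v powr a - G u powr a\<bar> \<le> enn2real (ennreal ?c * ?R)"
    proof (rule tendsto_le[OF _ tendsto_const lim])
      show "\<forall>\<^sub>F \<epsilon> in at_right 0. \<bar>(G v + \<epsilon>) powr a - (G u + \<epsilon>) powr a\<bar> \<le> enn2real (ennreal ?c * ?R)"
        unfolding eventually_at_right[OF zero_less_one]
        by (intro exI[of _ 1]) (use eps False in auto)
    qed simp
    then show ?thesis using False by (intro enn2real_le_enn) auto
  qed
qed

lemma dpd_bound:
  fixes g g1 :: "nat \<Rightarrow> real \<Rightarrow> real" and a u v :: real and y0 :: nat
  assumes g0: "\<And>y e. 0 \<le> g y e" and gs: "\<And>e. (\<lambda>y. g y e) sums 1"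
    and gd: "\<And>y e. (g y has_real_derivative g1 y e) (at e)"
    and gc: "\<And>y. continuous_on UNIV (g1 y)"
    and g1s: "\<And>e. summable (\<lambda>y. \<bar>g1 y e\<bar>)"
    and a: "a > 0"
  shows "ennreal \<bar>dpd g a y0 u - dpd g a y0 v\<bar> \<le> ennreal ((1+a) * 2 powr a * \<bar>v - u\<bar>) *
     ((\<integral>\<^sup>+ \<delta>. ennreal (phi_fun g (\<delta> * v + (1-\<delta>) * u)) * indicator {0..1} \<delta> \<partial>lborel) +
      (\<integral>\<^sup>+ \<delta>. ennreal (psi_fun g y0 (\<delta> * v + (1-\<delta>) * u)) * indicator {0..1} \<delta> \<partial>lborel))"
    (is "_ \<le> _ * (?I1 + ?I2)")
proof -
  let ?\<xi> = "\<lambda>\<delta>. \<delta> * v + (1-\<delta>) * u"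
  have der: "deriv (g y) = g1 y" for y
    using gd by (intro ext DERIV_imp_deriv) auto
  have gsum: "summable (\<lambda>y. g y e)" for e using gs by (auto simp: sums_iff)
  have g1le: "g y e \<le> 1" for y e
  proof -
    have "sum (\<lambda>y. g y e) {y} \<le> (\<Sum>y. g y e)"
      by (rule sum_le_suminf[OF gsum]) (auto intro: g0)
    then show ?thesis using gs[of e] by (simp add: sums_iff)
  qed
  define p where "p = 1 + a"
  have p: "1 \<le> p" using a by (simp add: p_def)
  have gp_le: "g y e powr p \<le> g y e" for y e
  proof (cases "g y e = 0")
    case False then show ?thesis using g0[of y e] g1le[of y e] p by (intro powr_le_one_le) auto
  qed simp
  have sp: "summable (\<lambda>y. g y e powr p)" for e
    by (rule summable_comparison_test'[OF gsum[of e]]) (use gp_le in auto)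
  have sdle: "\<bar>g y u - g y v\<bar> \<le> g y u + g y v" for y
    using g0[of y u] g0[of y v] by (simp add: abs_if)
  have sd: "summable (\<lambda>y. \<bar>g y u - g y v\<bar>)"
    by (rule summable_comparison_test'[OF summable_add[OF gsum[of u] gsum[of v]]]) (use sdle in auto)
  have T1: "\<bar>(\<Sum>y. g y u powr p) - (\<Sum>y. g y v powr p)\<bar> \<le> p * (\<Sum>y. \<bar>g y u - g y v\<bar>)"
  proof -
    have "(\<Sum>y. g y u powr p) - (\<Sum>y. g y v powr p) = (\<Sum>y. g y u powr p - g y v powr p)"
      using suminf_diff[OF sp[of u] sp[of v]] by simp
    moreover have "summable (\<lambda>y. \<bar>g y u powr p - g y v powr p\<bar>)"
      by (rule summable_comparison_test'[OF summable_mult[OF sd, of p]])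
         (use powr_lip g0 g1le p in auto)
    ultimately have "\<bar>(\<Sum>y. g y u powr p) - (\<Sum>y. g y v powr p)\<bar> \<le> (\<Sum>y. \<bar>g y u powr p - g y v powr p\<bar>)"
      by (simp add: summable_rabs)
    also have "\<dots> \<le> (\<Sum>y. p * \<bar>g y u - g y v\<bar>)"
      by (rule suminf_le[OF powr_lip[OF g0 g1le g0 g1le p] \<open>summable (\<lambda>y. \<bar>g y u powr p - g y v powr p\<bar>)\<close> summable_mult[OF sd]])
    also have "\<dots> = p * (\<Sum>y. \<bar>g y u - g y v\<bar>)" using suminf_mult[OF sd, of p] by simp
    finally show ?thesis .
  qed
  have [measurable]: "g1 y \<in> borel_measurable borel" for y
    using gc by (auto intro: borel_measurable_continuous_onI)
  have E1: "ennreal (\<Sum>y. \<bar>g y u - g y v\<bar>) \<le> ennreal \<bar>v - u\<bar> * ?I1"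
  proof -
    have "ennreal (\<Sum>y. \<bar>g y u - g y v\<bar>) = (\<Sum>y. ennreal \<bar>g y v - g y u\<bar>)"
      using sd by (subst suminf_ennreal2) (auto simp: abs_minus_commute)
    also have "\<dots> \<le> (\<Sum>y. ennreal \<bar>v - u\<bar> * (\<integral>\<^sup>+ \<delta>. ennreal \<bar>g1 y (?\<xi> \<delta>)\<bar> * indicator {0..1} \<delta> \<partial>lborel))"
      by (intro suminf_le ftc_bound gd gc) auto
    also have "\<dots> = ennreal \<bar>v - u\<bar> * (\<Sum>y. (\<integral>\<^sup>+ \<delta>. ennreal \<bar>g1 y (?\<xi> \<delta>)\<bar> * indicator {0..1} \<delta> \<partial>lborel))"
      by simp
    also have "(\<Sum>y. (\<integral>\<^sup>+ \<delta>. ennreal \<bar>g1 y (?\<xi> \<delta>)\<bar> * indicator {0..1} \<delta> \<partial>lborel))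
        = (\<integral>\<^sup>+ \<delta>. (\<Sum>y. ennreal \<bar>g1 y (?\<xi> \<delta>)\<bar> * indicator {0..1} \<delta>) \<partial>lborel)"
      by (rule nn_integral_suminf[symmetric]) measurable
    also have "\<dots> = ?I1"
    proof (rule nn_integral_cong)
      fix \<delta>
      have "(\<Sum>y. ennreal \<bar>g1 y (?\<xi> \<delta>)\<bar>) = ennreal (phi_fun g (?\<xi> \<delta>))"
        unfolding phi_fun_def der using g1s by (intro suminf_ennreal2) auto
      then show "(\<Sum>y. ennreal \<bar>g1 y (?\<xi> \<delta>)\<bar> * indicator {0..1} \<delta>) = ennreal (phi_fun g (?\<xi> \<delta>)) * indicator {0..1} \<delta>"
        by simp
    qed
    finally show ?thesis .
  qed
  have E2: "ennreal \<bar>g y0 v powr a - g y0 u powr a\<bar> \<le> ennreal (a * 2 powr a * \<bar>v - u\<bar>) * ?I2"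
    unfolding psi_fun_def der
    by (rule pow_psi_bound[OF g0 g1le gd gc a])
  have "\<bar>dpd g a y0 u - dpd g a y0 v\<bar> \<le> p * (\<Sum>y. \<bar>g y u - g y v\<bar>) + (1 + 1/a) * \<bar>g y0 v powr a - g y0 u powr a\<bar>"
  proof -
    have "dpd g a y0 u - dpd g a y0 v = ((\<Sum>y. g y u powr p) - (\<Sum>y. g y v powr p)) + (1 + 1/a) * (g y0 v powr a - g y0 u powr a)"
      unfolding dpd_def p_def by (simp add: algebra_simps)
    then have "\<bar>dpd g a y0 u - dpd g a y0 v\<bar> \<le> \<bar>(\<Sum>y. g y u powr p) - (\<Sum>y. g y v powr p)\<bar> + (1 + 1/a) * \<bar>g y0 v powr a - g y0 u powr a\<bar>"
      using a by (simp add: abs_triangle_ineq[THEN order_trans] abs_mult)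
    then show ?thesis using T1 by linarith
  qed
  then have "ennreal \<bar>dpd g a y0 u - dpd g a y0 v\<bar> \<le> ennreal p * ennreal (\<Sum>y. \<bar>g y u - g y v\<bar>) + ennreal (1 + 1/a) * ennreal \<bar>g y0 v powr a - g y0 u powr a\<bar>"
    using a p by (simp add: ennreal_mult[symmetric] ennreal_plus[symmetric] suminf_nonneg[OF sd] ennreal_leI del: ennreal_plus)
  also have "\<dots> \<le> ennreal p * (ennreal \<bar>v - u\<bar> * ?I1) + ennreal (1 + 1/a) * (ennreal (a * 2 powr a * \<bar>v - u\<bar>) * ?I2)"
    by (intro add_mono mult_left_mono E1 E2) auto
  also have "\<dots> = ennreal (p * \<bar>v - u\<bar>) * ?I1 + ennreal ((1+a) * 2 powr a * \<bar>v - u\<bar>) * ?I2"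
  proof -
    have e1: "(1 + 1/a) * (a * 2 powr a * \<bar>v - u\<bar>) = (1+a) * 2 powr a * \<bar>v - u\<bar>" using a by (simp add: field_simps)
    have e2: "ennreal (1 + 1/a) * (ennreal (a * 2 powr a * \<bar>v - u\<bar>) * ?I2) = ennreal ((1 + 1/a) * (a * 2 powr a * \<bar>v - u\<bar>)) * ?I2"
      using a by (simp add: ennreal_mult mult.assoc)
    have e3: "ennreal p * (ennreal \<bar>v - u\<bar> * ?I1) = ennreal (p * \<bar>v - u\<bar>) * ?I1"
      using p by (simp add: ennreal_mult mult.assoc)
    show ?thesis by (simp only: e1 e2 e3)
  qed
  also have "\<dots> \<le> ennreal ((1+a) * 2 powr a * \<bar>v - u\<bar>) * ?I1 + ennreal ((1+a) * 2 powr a * \<bar>v - u\<bar>) * ?I2"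
  proof -
    have "1 \<le> 2 powr a" using a by (intro ge_one_powr_ge_zero) auto
    then have pp: "p \<le> (1+a) * 2 powr a" using a unfolding p_def
      by (simp add: mult_le_cancel_left1)
    then have pv: "p * \<bar>v - u\<bar> \<le> (1+a) * 2 powr a * \<bar>v - u\<bar>"
      by (simp add: mult_right_mono)
    have "ennreal (p * \<bar>v - u\<bar>) * ?I1 \<le> ennreal ((1+a) * 2 powr a * \<bar>v - u\<bar>) * ?I1"
      by (rule mult_right_mono[OF ennreal_leI[OF pv]]) simp
    then show ?thesis by (rule add_right_mono)
  qed
  finally show ?thesis by (simp add: distrib_left)
qed

lemma countable_dense_subset:
  fixes S :: "'a::{metric_space, second_countable_topology} set"
  obtains D where "countable D" "D \<subseteq> S" "S \<subseteq> closure D"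
proof -
  obtain \<B> :: "'a set set" where B: "countable \<B>" "\<And>C. C \<in> \<B> \<Longrightarrow> open C"
    "\<And>T. open T \<Longrightarrow> \<exists>U. U \<subseteq> \<B> \<and> T = \<Union>U"
  proof -
    have "\<exists>\<B>::'a set set. countable \<B> \<and> (\<forall>C\<in>\<B>. open C) \<and> (\<forall>T. open T \<longrightarrow> (\<exists>U. U \<subseteq> \<B> \<and> T = \<Union>U))"
      by (rule univ_second_countable) auto
    then show ?thesis using that by blast
  qed
  define D where "D = (\<lambda>b. SOME x. x \<in> b \<inter> S) ` {b \<in> \<B>. b \<inter> S \<noteq> {}}"
  have "countable D" unfolding D_def using B(1) by auto
  moreover have "D \<subseteq> S"
  proof
    fix d assume "d \<in> D"
    then obtain b where b: "b \<inter> S \<noteq> {}" "d = (SOME x. x \<in> b \<inter> S)" unfolding D_def by auto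
    have "\<exists>z. z \<in> b \<inter> S" using b(1) by blast
    then have "d \<in> b \<inter> S" unfolding b(2) by (rule someI_ex)
    then show "d \<in> S" by blast
  qed
  moreover have "S \<subseteq> closure D"
  proof
    fix x assume x: "x \<in> S"
    show "x \<in> closure D" unfolding closure_approachable
    proof (intro allI impI)
      fix e :: real assume e: "e > 0"
      obtain U where U: "U \<subseteq> \<B>" "ball x e = \<Union>U" using B(3)[of "ball x e"] by auto
      then obtain b where b: "b \<in> U" "x \<in> b" using e x by (metis UnionE centre_in_ball)
      then have bB: "b \<in> \<B>" "b \<inter> S \<noteq> {}" "b \<subseteq> ball x e" using U x by auto
      define y where "y = (SOME x. x \<in> b \<inter> S)"
      have "\<exists>z. z \<in> b \<inter> S" using bB(2) by blast
      then have "y \<in> b \<inter> S" unfolding y_def by (rule someI_ex)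
      moreover have "y \<in> D" unfolding D_def y_def using bB by auto
      moreover have "y \<in> ball x e" using bB(3) \<open>y \<in> b \<inter> S\<close> by auto
      ultimately show "\<exists>y\<in>D. dist y x < e" by (intro bexI[of _ y]) (auto simp: dist_commute mem_ball)
    qed
  qed
  ultimately show ?thesis using that by blast
qed

lemma sup_dense_eq:
  fixes F :: "'a::metric_space \<Rightarrow> ennreal" and h :: "nat \<Rightarrow> 'a \<Rightarrow> real"
  assumes DS: "D \<subseteq> S" and SD: "S \<subseteq> closure D" and hc: "\<And>N. continuous_on S (h N)"
    and F: "\<And>\<theta>. \<theta> \<in> S \<Longrightarrow> F \<theta> = (SUP N. ennreal (h N \<theta>))"
  shows "(SUP \<theta>\<in>S. F \<theta>) = (SUP \<theta>\<in>D. F \<theta>)"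
proof (rule antisym)
  show "(SUP \<theta>\<in>D. F \<theta>) \<le> (SUP \<theta>\<in>S. F \<theta>)" using DS by (rule SUP_subset_mono) simp
  show "(SUP \<theta>\<in>S. F \<theta>) \<le> (SUP \<theta>\<in>D. F \<theta>)"
  proof (rule SUP_least)
    fix \<theta> assume th: "\<theta> \<in> S"
    show "F \<theta> \<le> (SUP \<theta>\<in>D. F \<theta>)" unfolding F[OF th]
    proof (rule SUP_least)
      fix N
      from th SD have "\<theta> \<in> closure D" by auto
      then obtain d where d: "\<And>n. d n \<in> D" "d \<longlonglongrightarrow> \<theta>"
        unfolding closure_sequential by blast
      have "(\<lambda>n. h N (d n)) \<longlonglongrightarrow> h N \<theta>"
        by (rule continuous_on_tendsto_compose[OF hc d(2) th]) (rule always_eventually, use d DS in auto)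
      then have lim: "(\<lambda>n. ennreal (h N (d n))) \<longlonglongrightarrow> ennreal (h N \<theta>)"
        by (rule tendsto_ennrealI)
      have "ennreal (h N (d n)) \<le> (SUP \<theta>\<in>D. F \<theta>)" for n
      proof -
        have dn: "d n \<in> S" using d DS by auto
        have "ennreal (h N (d n)) \<le> F (d n)" unfolding F[OF dn] by (rule SUP_upper) simp
        also have "\<dots> \<le> (SUP \<theta>\<in>D. F \<theta>)" using d by (auto intro: SUP_upper)
        finally show ?thesis .
      qed
      then show "ennreal (h N \<theta>) \<le> (SUP \<theta>\<in>D. F \<theta>)"
        by (intro LIMSEQ_le_const2[OF lim]) auto
    qed
  qed
qed

lemma kronecker:
  fixes b :: "nat \<Rightarrow> real"
  assumes b0: "\<And>t. 0 \<le> b t" and bs: "summable (\<lambda>t. b (Suc t) / real (Suc t))"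
  shows "(\<lambda>n. (\<Sum>t=1..n. b t) / real n) \<longlonglongrightarrow> 0"
proof (rule LIMSEQ_I)
  fix r :: real assume r: "r > 0"
  define c where "c t = b t / real t" for t
  have c0: "c t \<ge> 0" for t using b0 by (simp add: c_def)
  have cs: "summable c" using bs by (simp add: c_def summable_Suc_iff[of c, symmetric])
  define s where "s n = (\<Sum>t<n. c t)" for n
  have sL: "s \<longlonglongrightarrow> suminf c" unfolding s_def using cs by (rule summable_LIMSEQ)
  have sle: "s n \<le> suminf c" for n unfolding s_def using cs c0 by (intro sum_le_suminf) auto
  from LIMSEQ_D[OF sL, of "r/2"] r obtain N0 where N0: "\<And>n. n \<ge> N0 \<Longrightarrow> norm (s n - suminf c) < r/2" by auto
  define N where "N = Suc N0"
  have N1: "\<bar>s N - suminf c\<bar> < r/2" using N0[of N] by (simp add: N_def)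
  have N: "suminf c - s N < r/2" using N1 abs_less_iff[of "s N - suminf c" "r/2"] by linarith
  define K where "K = (\<Sum>t\<in>{1..<N}. b t)"
  have K0: "K \<ge> 0" unfolding K_def using b0 by (intro sum_nonneg) auto
  obtain M where M: "real M > 2 * K / r" using reals_Archimedean2 by blast
  show "\<exists>no. \<forall>n\<ge>no. norm ((\<Sum>t=1..n. b t) / real n - 0) < r"
  proof (intro exI[of _ "max N (Suc M)"] allI impI)
    fix n assume n: "n \<ge> max N (Suc M)"
    then have nN: "n \<ge> N" and nM: "n > M" and n1: "n \<ge> 1" by (auto simp: N_def)
    have split: "(\<Sum>t=1..n. b t) = K + (\<Sum>t\<in>{N..<Suc n}. b t)"
    proof -
      have "{1..n} = {1..<N} \<union> {N..<Suc n}" using nN by (auto simp: N_def)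
      moreover have "{1..<N} \<inter> {N..<Suc n} = {}" by auto
      ultimately show ?thesis unfolding K_def by (simp add: sum.union_disjoint)
    qed
    have "(\<Sum>t\<in>{N..<Suc n}. b t) = (\<Sum>t\<in>{N..<Suc n}. real t * c t)"
      by (intro sum.cong) (auto simp: c_def N_def)
    also have "\<dots> \<le> (\<Sum>t\<in>{N..<Suc n}. real n * c t)"
      by (intro sum_mono mult_right_mono c0) auto
    also have "\<dots> = real n * (s (Suc n) - s N)"
    proof -
      have "s (Suc n) = s N + (\<Sum>t\<in>{N..<Suc n}. c t)"
        unfolding s_def lessThan_atLeast0 using nN by (intro sum.atLeastLessThan_concat[symmetric]) auto
      then have "s (Suc n) - s N = (\<Sum>t\<in>{N..<Suc n}. c t)" by simp
      then show ?thesis by (simp only: sum_distrib_left)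
    qed
    also have "\<dots> \<le> real n * (suminf c - s N)"
      using sle[of "Suc n"] by (intro mult_left_mono) auto
    also have "\<dots> \<le> real n * (r/2)" using N by (intro mult_left_mono) auto
    finally have T: "(\<Sum>t\<in>{N..<Suc n}. b t) \<le> real n * (r/2)" .
    have nonneg: "0 \<le> (\<Sum>t=1..n. b t)" using b0 by (intro sum_nonneg) auto
    have npos: "real n > 0" using n1 by auto
    have "(\<Sum>t=1..n. b t) / real n \<le> K / real n + r/2"
      using split T npos by (simp add: field_simps)
    also have "K / real n < r/2"
    proof -
      have "2 * K / r < real n" using M nM by linarith
      then have "2 * K < r * real n" using r by (simp add: field_simps)
      then show ?thesis using npos by (simp add: field_simps)
    qed
    finally show "norm ((\<Sum>t=1..n. b t) / real n - 0) < r"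
      using nonneg npos by simp
  qed
qed

lemma telescope_bound:
  fixes gam x :: real
  assumes gam: "gam > 1" and x: "x \<ge> 1"
  shows "x powr (- gam) \<le> 2 powr gam / (gam - 1) * (x powr (1 - gam) - (x + 1) powr (1 - gam))"
proof -
  have cont: "continuous_on {x..x+1} (\<lambda>z. z powr (1 - gam))"
    using x by (intro continuous_intros) auto
  have "(\<lambda>z. z powr (1 - gam)) differentiable (at z)" if "x < z" "z < x + 1" for z
    using that x unfolding real_differentiable_def by (auto intro!: derivative_eq_intros exI)
  from MVT[OF _ cont this] obtain l z where z: "x < z" "z < x + 1"
    and dz: "DERIV (\<lambda>z. z powr (1 - gam)) z :> l"
    and eq: "(x + 1) powr (1 - gam) - x powr (1 - gam) = (x + 1 - x) * l" by auto
  have "DERIV (\<lambda>z. z powr (1 - gam)) z :> (1 - gam) * z powr (1 - gam - 1)"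
    using z x by (auto intro!: derivative_eq_intros)
  then have l: "l = (1 - gam) * z powr (- gam)" using dz DERIV_unique by fastforce
  have "(x + 1) powr (- gam) \<le> z powr (- gam)"
    using z x gam by (intro powr_mono2') auto
  then have D0: "(gam - 1) * (x + 1) powr (- gam) \<le> (gam - 1) * z powr (- gam)"
    using gam by (intro mult_left_mono) auto
  have D1: "x powr (1 - gam) - (x + 1) powr (1 - gam) = (gam - 1) * z powr (- gam)"
    using eq l by (simp add: algebra_simps)
  have D: "(gam - 1) * (x + 1) powr (- gam) \<le> x powr (1 - gam) - (x + 1) powr (1 - gam)"
    using D0 D1 by simp
  have "x + 1 \<le> 2 * x" using x by simp
  then have "(x + 1) powr gam \<le> (2 * x) powr gam" using gam x by (intro powr_mono2) auto
  also have "\<dots> = 2 powr gam * x powr gam" using x by (simp add: powr_mult)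
  finally have "x powr (- gam) \<le> 2 powr gam * (x + 1) powr (- gam)"
    using x gam by (simp add: powr_minus field_simps)
  also have "\<dots> \<le> 2 powr gam * ((x powr (1 - gam) - (x + 1) powr (1 - gam)) / (gam - 1))"
    using D gam by (intro mult_left_mono) (auto simp: field_simps)
  finally show ?thesis by (simp add: field_simps)
qed

lemma tail_bound:
  fixes alpha :: "nat \<Rightarrow> real" and gam :: real
  assumes a0: "\<And>k. alpha k \<ge> 0" and gam: "gam > 1"
    and ab: "alpha \<in> O(\<lambda>k. real (Suc k) powr (- gam))"
  obtains K where "K > 0" "summable alpha"
    "\<And>m. summable (\<lambda>k. alpha (k + m))"
    "\<And>m. (\<Sum>k. alpha (k + m)) \<le> K * real (Suc m) powr (1 - gam)"
proof -
  from ab obtain c where c: "c > 0" and ev: "eventually (\<lambda>k. norm (alpha k) \<le> c * norm (real (Suc k) powr (- gam))) at_top"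
    by (elim landau_o.bigE)
  then obtain N where N: "\<And>k. k \<ge> N \<Longrightarrow> alpha k \<le> c * real (Suc k) powr (- gam)"
    using a0 by (auto simp: eventually_at_top_linorder)
  define c' where "c' = c + (\<Sum>k<N. alpha k * real (Suc k) powr gam)"
  have c'pos: "c' > 0" unfolding c'_def using c a0 by (intro add_pos_nonneg sum_nonneg) auto
  have abound: "alpha k \<le> c' * real (Suc k) powr (- gam)" for k
  proof (cases "k \<ge> N")
    case True
    have "c \<le> c'" unfolding c'_def using a0 by (intro add_increasing2 sum_nonneg) auto
    then show ?thesis using N[OF True] by (meson dual_order.trans mult_right_mono powr_ge_zero)
  next
    case False
    have "alpha k * real (Suc k) powr gam \<le> (\<Sum>k<N. alpha k * real (Suc k) powr gam)"
      using False a0 by (intro member_le_sum) auto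
    also have "\<dots> \<le> c'" unfolding c'_def using c by simp
    finally have "alpha k * real (Suc k) powr gam \<le> c'" .
    then have "alpha k * real (Suc k) powr gam * real (Suc k) powr (- gam) \<le> c' * real (Suc k) powr (- gam)"
      by (intro mult_right_mono) auto
    then show ?thesis by (simp add: powr_minus field_simps)
  qed
  define f where "f k = real (Suc k) powr (1 - gam)" for k
  have flim: "f \<longlonglongrightarrow> 0" unfolding f_def
    using gam by (intro tendsto_neg_powr filterlim_compose[OF filterlim_real_sequentially filterlim_Suc]) auto
  define K where "K = c' * 2 powr gam / (gam - 1)"
  have Kpos: "K > 0" unfolding K_def using c'pos gam by auto
  have sm: "summable (\<lambda>k. alpha (k + m)) \<and> (\<Sum>k. alpha (k + m)) \<le> K * real (Suc m) powr (1 - gam)" for m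
  proof -
    have tel: "(\<lambda>k. f (k + m) - f (Suc (k + m))) sums (f (0 + m) - 0)"
      using telescope_sums'[of "\<lambda>k. f (k + m)" 0] flim
      by (simp add: LIMSEQ_ignore_initial_segment)
    have le: "alpha (k + m) \<le> K * (f (k + m) - f (Suc (k + m)))" for k
    proof -
      have "alpha (k + m) \<le> c' * real (Suc (k + m)) powr (- gam)" by (rule abound)
      also have "\<dots> \<le> c' * (2 powr gam / (gam - 1) * (real (Suc (k + m)) powr (1 - gam) - (real (Suc (k + m)) + 1) powr (1 - gam)))"
        using c'pos by (intro mult_left_mono telescope_bound gam) auto
      also have "\<dots> = K * (f (k + m) - f (Suc (k + m)))"
        unfolding K_def f_def by (simp add: add.commute)
      finally show ?thesis .
    qed
    have s2: "summable (\<lambda>k. K * (f (k + m) - f (Suc (k + m))))"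
      using tel by (intro summable_mult) (auto simp: sums_iff)
    have sa: "summable (\<lambda>k. alpha (k + m))"
      by (rule summable_comparison_test'[OF s2]) (use le a0 in auto)
    have "(\<Sum>k. alpha (k + m)) \<le> (\<Sum>k. K * (f (k + m) - f (Suc (k + m))))"
      by (rule suminf_le[OF le sa s2])
    also have "\<dots> = K * f m" using tel by (simp add: sums_iff suminf_mult)
    finally show ?thesis using sa by (simp add: f_def)
  qed
  show ?thesis
    by (rule that[OF Kpos]) (use sm[of 0] sm in auto)
qed

lemma amgm_enn:
  fixes x p :: real and y :: ennreal
  assumes "x \<ge> 0" "p > 0"
  shows "ennreal x * y \<le> ennreal (p / 2) * ennreal (x^2) + y^2 * ennreal (1 / (2 * p))"
proof (cases y)
  case (real r)
  have "x * r \<le> p / 2 * x^2 + r^2 * (1 / (2 * p))"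
  proof -
    have "0 \<le> (p * x - r)^2" by simp
    then have "2 * p * (x * r) \<le> p^2 * x^2 + r^2" by (simp add: power2_eq_square algebra_simps)
    then show ?thesis using assms by (simp add: field_simps power2_eq_square)
  qed
  then have le: "ennreal (x * r) \<le> ennreal (p / 2 * x^2 + r^2 * (1 / (2 * p)))" by (rule ennreal_leI)
  have e1: "ennreal (p/2 * x^2 + r^2 * (1/(2*p))) = ennreal (p/2 * x^2) + ennreal (r^2 * (1/(2*p)))"
    by (rule ennreal_plus) (use assms in auto)
  have e2: "ennreal (p/2 * x^2) = ennreal (p/2) * ennreal (x^2)" by (rule ennreal_mult) (use assms in auto)
  have e3: "ennreal (r^2 * (1/(2*p))) = ennreal (r^2) * ennreal (1/(2*p))" by (rule ennreal_mult) (use assms in auto)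
  have e4: "y^2 = ennreal (r^2)" using real by (simp add: ennreal_power)
  have "ennreal x * y = ennreal (x * r)" using real assms by (simp add: ennreal_mult)
  also note le
  also have "ennreal (p / 2 * x^2 + r^2 * (1 / (2 * p))) = ennreal (p/2) * ennreal (x^2) + y^2 * ennreal (1/(2*p))"
    unfolding e1 e2 e3 e4 ..
  finally show ?thesis .
next
  case top
  then show ?thesis using assms
    by (cases "x = 0") (auto simp: ennreal_mult_top ennreal_top_mult)
qed

lemma expect_bound:
  fixes M :: "'w measure" and G :: "'w \<Rightarrow> real \<Rightarrow> ennreal" and tm :: "nat \<Rightarrow> 'w \<Rightarrow> real"
    and a :: "nat \<Rightarrow> real" and p K :: real
  assumes M: "prob_space M"
    and Gm: "(\<lambda>(w, \<delta>). G w \<delta>) \<in> borel_measurable (M \<Otimes>\<^sub>M lborel)"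
    and G2: "\<And>\<delta>. \<delta> \<in> {0..1} \<Longrightarrow> (\<integral>\<^sup>+ w. (G w \<delta>)^2 \<partial>M) \<le> ennreal (p^2)"
    and p: "p > 0"
    and tmm: "\<And>k. tm k \<in> borel_measurable M" and tm0: "\<And>k w. 0 \<le> tm k w"
    and tm2: "\<And>k. (\<integral>\<^sup>+ w. ennreal ((tm k w)^2) \<partial>M) \<le> ennreal K" and K: "K \<ge> 0"
    and a0: "\<And>k. 0 \<le> a k"
  shows "(\<integral>\<^sup>+ w. (\<Sum>k. ennreal (a k * tm k w)) * (\<integral>\<^sup>+ \<delta>. G w \<delta> * indicator {0..1} \<delta> \<partial>lborel) \<partial>M)
    \<le> (\<Sum>k. ennreal (a k)) * ennreal (p * (K + 1) / 2)"
proof -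
  interpret prob_space M by (rule M)
  interpret P: pair_sigma_finite M lborel
    by (simp add: pair_sigma_finite_def prob_space_imp_sigma_finite M lborel.sigma_finite_measure_axioms)
  note [measurable] = Gm tmm
  have [measurable]: "{0..1::real} \<in> sets borel" by simp
  have [measurable]: "Measurable.pred borel (\<lambda>x::real. x \<in> {0..1})" by (simp add: pred_def)
  define A where "A = (\<Sum>k. ennreal (a k))"
  define Q where "Q w = (\<integral>\<^sup>+ \<delta>. (G w \<delta>)^2 * indicator {0..1} \<delta> \<partial>lborel)" for w
  define S1 where "S1 w = (\<Sum>k. ennreal (a k) * ennreal (p/2) * ennreal ((tm k w)^2))" for w
  have Gw: "(\<lambda>\<delta>. G w \<delta>) \<in> borel_measurable lborel" if "w \<in> space M" for w
    using measurable_Pair2[OF Gm that] by simp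
  have Gd: "(\<lambda>w. G w \<delta>) \<in> borel_measurable M" for \<delta>
    using measurable_compose[OF measurable_Pair2'[of \<delta> lborel M] Gm] by simp
  have ind1: "(\<integral>\<^sup>+ \<delta>. indicator {0..1::real} \<delta> \<partial>lborel) = 1" by simp
  have pw: "(\<Sum>k. ennreal (a k * tm k w)) * (\<integral>\<^sup>+ \<delta>. G w \<delta> * indicator {0..1} \<delta> \<partial>lborel)
      \<le> S1 w + A * ennreal (1 / (2 * p)) * Q w" if w: "w \<in> space M" for w
  proof -
    note [measurable] = Gw[OF w]
    have "(\<Sum>k. ennreal (a k * tm k w)) * (\<integral>\<^sup>+ \<delta>. G w \<delta> * indicator {0..1} \<delta> \<partial>lborel)
        = (\<integral>\<^sup>+ \<delta>. (\<Sum>k. ennreal (a k * tm k w)) * (G w \<delta> * indicator {0..1} \<delta>) \<partial>lborel)"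
      by (rule nn_integral_cmult[symmetric]) measurable
    also have "\<dots> \<le> (\<integral>\<^sup>+ \<delta>. S1 w * indicator {0..1} \<delta> + (A * ennreal (1 / (2 * p))) * ((G w \<delta>)^2 * indicator {0..1} \<delta>) \<partial>lborel)"
    proof (rule nn_integral_mono)
      fix \<delta>
      have "(\<Sum>k. ennreal (a k * tm k w)) * G w \<delta> = (\<Sum>k. ennreal (a k * tm k w) * G w \<delta>)"
        by (rule ennreal_suminf_multc[symmetric])
      also have "\<dots> = (\<Sum>k. ennreal (a k) * (ennreal (tm k w) * G w \<delta>))"
        using a0 tm0 by (simp add: ennreal_mult mult.assoc)
      also have "\<dots> \<le> (\<Sum>k. ennreal (a k) * (ennreal (p / 2) * ennreal ((tm k w)^2) + (G w \<delta>)^2 * ennreal (1 / (2 * p))))"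
        by (intro suminf_le mult_left_mono amgm_enn tm0 p) auto
      also have "\<dots> = (\<Sum>k. ennreal (a k) * ennreal (p / 2) * ennreal ((tm k w)^2) + ennreal (a k) * ((G w \<delta>)^2 * ennreal (1 / (2 * p))))"
        by (simp add: distrib_left mult.assoc)
      also have "\<dots> = S1 w + A * ((G w \<delta>)^2 * ennreal (1 / (2 * p)))"
        unfolding S1_def A_def by (subst suminf_add[symmetric]) auto
      finally have "(\<Sum>k. ennreal (a k * tm k w)) * G w \<delta> \<le> S1 w + A * ((G w \<delta>)^2 * ennreal (1 / (2 * p)))" .
      then show "(\<Sum>k. ennreal (a k * tm k w)) * (G w \<delta> * indicator {0..1} \<delta>)
          \<le> S1 w * indicator {0..1} \<delta> + (A * ennreal (1 / (2 * p))) * ((G w \<delta>)^2 * indicator {0..1} \<delta>)"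
        by (cases "\<delta> \<in> {0..1}") (auto simp: mult_ac)
    qed
    also have "\<dots> = (\<integral>\<^sup>+ \<delta>. S1 w * indicator {0..1::real} \<delta> \<partial>lborel) + (\<integral>\<^sup>+ \<delta>. (A * ennreal (1 / (2 * p))) * ((G w \<delta>)^2 * indicator {0..1} \<delta>) \<partial>lborel)"
    proof -
      have m1: "(\<lambda>\<delta>::real. S1 w * indicator {0..1} \<delta>) \<in> borel_measurable lborel"
        by (intro borel_measurable_times_ennreal borel_measurable_const borel_measurable_indicator) (simp add: atLeastAtMost_borel)
      have m2: "(\<lambda>\<delta>. (A * ennreal (1 / (2 * p))) * ((G w \<delta>)^2 * indicator {0..1} \<delta>)) \<in> borel_measurable lborel"
        by (intro borel_measurable_times_ennreal borel_measurable_const borel_measurable_power_ennreal Gw[OF w] borel_measurable_indicator) (simp add: atLeastAtMost_borel)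
      show ?thesis using nn_integral_add[OF m1 m2] by simp
    qed
    also have "(\<integral>\<^sup>+ \<delta>. S1 w * indicator {0..1::real} \<delta> \<partial>lborel) = S1 w"
      by (simp add: nn_integral_cmult_indicator)
    also have "(\<integral>\<^sup>+ \<delta>. (A * ennreal (1 / (2 * p))) * ((G w \<delta>)^2 * indicator {0..1} \<delta>) \<partial>lborel) = (A * ennreal (1 / (2 * p))) * Q w"
      unfolding Q_def by (intro nn_integral_cmult borel_measurable_times_ennreal borel_measurable_const borel_measurable_power_ennreal Gw[OF w] borel_measurable_indicator) (simp add: atLeastAtMost_borel)
    finally show ?thesis .
  qed
  have S1m: "S1 \<in> borel_measurable M" unfolding S1_def by measurable
  have Qm: "Q \<in> borel_measurable M" unfolding Q_def by measurable
  have "(\<integral>\<^sup>+ w. (\<Sum>k. ennreal (a k * tm k w)) * (\<integral>\<^sup>+ \<delta>. G w \<delta> * indicator {0..1} \<delta> \<partial>lborel) \<partial>M)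
      \<le> (\<integral>\<^sup>+ w. S1 w + A * ennreal (1 / (2 * p)) * Q w \<partial>M)"
    by (rule nn_integral_mono) (rule pw)
  also have "\<dots> = (\<integral>\<^sup>+ w. S1 w \<partial>M) + A * ennreal (1 / (2 * p)) * (\<integral>\<^sup>+ w. Q w \<partial>M)"
    using S1m Qm by (simp add: nn_integral_add nn_integral_cmult)
  also have "(\<integral>\<^sup>+ w. S1 w \<partial>M) \<le> A * ennreal (p/2) * ennreal K"
  proof -
    have "(\<integral>\<^sup>+ w. S1 w \<partial>M) = (\<Sum>k. ennreal (a k) * ennreal (p/2) * (\<integral>\<^sup>+ w. ennreal ((tm k w)^2) \<partial>M))"
      unfolding S1_def by (subst nn_integral_suminf) (auto simp: nn_integral_cmult)
    also have "\<dots> \<le> (\<Sum>k. ennreal (a k) * ennreal (p/2) * ennreal K)"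
      by (intro suminf_le mult_left_mono tm2) auto
    also have "\<dots> = A * ennreal (p/2) * ennreal K" unfolding A_def by simp
    finally show ?thesis .
  qed
  also have "(\<integral>\<^sup>+ w. Q w \<partial>M) \<le> ennreal (p^2)"
  proof -
    have "(\<integral>\<^sup>+ w. Q w \<partial>M) = (\<integral>\<^sup>+ \<delta>. (\<integral>\<^sup>+ w. (G w \<delta>)^2 * indicator {0..1} \<delta> \<partial>M) \<partial>lborel)"
      unfolding Q_def by (rule P.Fubini'[symmetric]) measurable
    also have "\<dots> = (\<integral>\<^sup>+ \<delta>. (\<integral>\<^sup>+ w. (G w \<delta>)^2 \<partial>M) * indicator {0..1} \<delta> \<partial>lborel)"
      by (intro nn_integral_cong nn_integral_multc) (use Gd in measurable)
    also have "\<dots> \<le> (\<integral>\<^sup>+ \<delta>. ennreal (p^2) * indicator {0..1::real} \<delta> \<partial>lborel)"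
    proof (rule nn_integral_mono)
      fix \<delta> :: real
      show "(\<integral>\<^sup>+ w. (G w \<delta>)^2 \<partial>M) * indicator {0..1} \<delta> \<le> ennreal (p^2) * indicator {0..1} \<delta>"
        using G2[of \<delta>] by (cases "\<delta> \<in> {0..1}") auto
    qed
    also have "\<dots> = ennreal (p^2)" by (simp add: nn_integral_cmult_indicator)
    finally show ?thesis .
  qed
  finally have "(\<integral>\<^sup>+ w. (\<Sum>k. ennreal (a k * tm k w)) * (\<integral>\<^sup>+ \<delta>. G w \<delta> * indicator {0..1} \<delta> \<partial>lborel) \<partial>M)
      \<le> A * ennreal (p/2) * ennreal K + A * ennreal (1 / (2 * p)) * ennreal (p^2)"
    by (simp add: mult_left_mono add_mono)
  also have "\<dots> = A * ennreal (p * (K + 1) / 2)"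
  proof -
    have "ennreal (p/2) * ennreal K + ennreal (1 / (2 * p)) * ennreal (p^2) = ennreal (p * (K + 1) / 2)"
    proof -
      have "ennreal (p/2) * ennreal K + ennreal (1 / (2 * p)) * ennreal (p^2) = ennreal (p/2 * K + 1 / (2 * p) * p^2)"
      proof -
        have q1: "ennreal (p/2 * K + 1 / (2 * p) * p^2) = ennreal (p/2 * K) + ennreal (1 / (2 * p) * p^2)"
          by (rule ennreal_plus) (use p K in auto)
        have q2: "ennreal (p/2 * K) = ennreal (p/2) * ennreal K" by (rule ennreal_mult) (use p K in auto)
        have q3: "ennreal (1 / (2 * p) * p^2) = ennreal (1 / (2 * p)) * ennreal (p^2)" by (rule ennreal_mult) (use p in auto)
        show ?thesis unfolding q1 q2 q3 ..
      qed
      also have "p/2 * K + 1 / (2 * p) * p^2 = p * (K + 1) / 2" using p by (simp add: field_simps power2_eq_square)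
      finally show ?thesis .
    qed
    then show ?thesis by (simp add: distrib_left[symmetric] mult.assoc)
  qed
  finally show ?thesis unfolding A_def .
qed

lemma supn_ge: "\<bar>x $ i\<bar> \<le> supn x"
  unfolding supn_def by (rule Max_ge) auto

lemma supn_nonneg: "0 \<le> supn x"
  using supn_ge[of x undefined] by linarith

lemma supn_zero: "supn 0 = 0"
  unfolding supn_def by (simp add: image_constant_conv)

lemma supn_uminus: "supn (- x) = supn x"
  unfolding supn_def by simp

lemma supn_meas: "supn \<in> borel_measurable borel"
proof -
  have [measurable]: "(\<lambda>x::real^'a. x $ i) \<in> borel_measurable borel" for i
    by (intro borel_measurable_continuous_onI linear_continuous_on bounded_linear_vec_nth)
  have "(\<lambda>x::real^'a. Max ((\<lambda>i. \<bar>x $ i\<bar>) ` UNIV)) \<in> borel_measurable borel"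
    by (intro borel_measurable_Max) auto
  then show ?thesis unfolding supn_def[abs_def] by simp
qed

lemma seq_meas:
  fixes yk :: "nat \<Rightarrow> 'w \<Rightarrow> nat" and xk :: "nat \<Rightarrow> 'w \<Rightarrow> real ^ 'e"
  assumes "\<And>k. yk k \<in> M \<rightarrow>\<^sub>M count_space UNIV" "\<And>k. xk k \<in> borel_measurable M"
  shows "(\<lambda>w. (\<lambda>k. yk k w, \<lambda>k. xk k w)) \<in> M \<rightarrow>\<^sub>M (PiM UNIV (\<lambda>_. count_space UNIV) \<Otimes>\<^sub>M PiM UNIV (\<lambda>_. borel))"
proof (rule measurable_Pair)
  show "(\<lambda>w. \<lambda>k. yk k w) \<in> M \<rightarrow>\<^sub>M PiM UNIV (\<lambda>_. count_space UNIV)"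
    by (rule measurable_PiM_single') (use assms in auto)
  show "(\<lambda>w. \<lambda>k. xk k w) \<in> M \<rightarrow>\<^sub>M PiM UNIV (\<lambda>_. borel)"
    by (rule measurable_PiM_single') (use assms in auto)
qed

lemma f_comp_meas:
  fixes yk :: "nat \<Rightarrow> 'w \<Rightarrow> nat" and xk :: "nat \<Rightarrow> 'w \<Rightarrow> real ^ 'e"
  assumes "\<And>k. yk k \<in> M \<rightarrow>\<^sub>M count_space UNIV" "\<And>k. xk k \<in> borel_measurable M"
    and fm: "(\<lambda>(y, x). f y x) \<in> borel_measurable (PiM UNIV (\<lambda>_. count_space UNIV) \<Otimes>\<^sub>M PiM UNIV (\<lambda>_. borel))"
  shows "(\<lambda>w. f (\<lambda>k. yk k w) (\<lambda>k. xk k w)) \<in> borel_measurable M"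
  using measurable_compose[OF seq_meas[OF assms(1,2)] fm] by simp

lemma psi_sup:
  fixes G G1 :: "real \<Rightarrow> real"
  assumes G0: "\<And>e. 0 \<le> G e" and Gd: "\<And>e. (G has_real_derivative G1 e) (at e)"
  shows "ennreal \<bar>inverse (G e) * G1 e\<bar> = (SUP N. ennreal (\<bar>G1 e\<bar> / (G e + inverse (real (Suc N)))))"
proof (cases "G e = 0")
  case True
  then have "G1 e = 0" using deriv_zero_at_zero[of G G1 e] G0 Gd by blast
  then show ?thesis using True by simp
next
  case False
  then have Gp: "G e > 0" using G0[of e] by auto
  let ?s = "\<lambda>N. ennreal (\<bar>G1 e\<bar> / (G e + inverse (real (Suc N))))"
  have inc: "incseq ?s"
  proof (rule incseq_SucI)
    fix N
    have "inverse (real (Suc (Suc N))) \<le> inverse (real (Suc N))" by (simp add: field_simps)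
    have "\<bar>G1 e\<bar> / (G e + inverse (real (Suc N))) \<le> \<bar>G1 e\<bar> / (G e + inverse (real (Suc (Suc N))))"
      by (rule frac_le) (use Gp \<open>inverse (real (Suc (Suc N))) \<le> inverse (real (Suc N))\<close> in \<open>auto intro: add_pos_pos\<close>)
    then show "?s N \<le> ?s (Suc N)" by (rule ennreal_leI)
  qed
  have "(\<lambda>N. \<bar>G1 e\<bar> / (G e + inverse (real (Suc N)))) \<longlonglongrightarrow> \<bar>G1 e\<bar> / (G e + 0)"
    using Gp by (intro tendsto_intros LIMSEQ_inverse_real_of_nat) auto
  then have "?s \<longlonglongrightarrow> ennreal (\<bar>G1 e\<bar> / G e)" by (intro tendsto_ennrealI) simp
  moreover have "?s \<longlonglongrightarrow> (SUP N. ?s N)" using inc by (rule LIMSEQ_SUP)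
  ultimately have "(SUP N. ?s N) = ennreal (\<bar>G1 e\<bar> / G e)" using LIMSEQ_unique by blast
  then show ?thesis using Gp by (simp add: abs_mult divide_inverse mult.commute)
qed

lemma phi_sup:
  fixes g1 :: "nat \<Rightarrow> real \<Rightarrow> real"
  assumes "summable (\<lambda>y. \<bar>g1 y e\<bar>)"
  shows "ennreal (\<Sum>y. \<bar>g1 y e\<bar>) = (SUP N. ennreal (\<Sum>y<N. \<bar>g1 y e\<bar>))"
proof -
  have "ennreal (\<Sum>y. \<bar>g1 y e\<bar>) = (\<Sum>y. ennreal \<bar>g1 y e\<bar>)"
    using assms by (intro suminf_ennreal2[symmetric]) auto
  also have "\<dots> = (SUP N. \<Sum>y<N. ennreal \<bar>g1 y e\<bar>)" by (rule suminf_eq_SUP)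
  also have "\<dots> = (SUP N. ennreal (\<Sum>y<N. \<bar>g1 y e\<bar>))" by (simp add: sum_ennreal)
  finally show ?thesis .
qed

theorem lemma6p1:
  fixes M :: "'w measure"
    and Y :: "int \<Rightarrow> 'w \<Rightarrow> nat"
    and X :: "int \<Rightarrow> 'w \<Rightarrow> real ^ 'e"
    and f :: "real ^ 'd \<Rightarrow> (nat \<Rightarrow> nat) \<Rightarrow> (nat \<Rightarrow> real ^ 'e) \<Rightarrow> real"
    and Theta :: "(real ^ 'd) set"
    and theta0 :: "real ^ 'd"
    and g :: "nat \<Rightarrow> real \<Rightarrow> real"
    and eta :: "real \<Rightarrow> real"
    and a eps C cbar c_eta gam :: real
    and alpha0 phibar psibar :: "nat \<Rightarrow> real"
  assumes prob: "prob_space M"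
    and a_pos: "a > 0"
    and Theta: "compact Theta"
    and theta0: "theta0 \<in> Theta"
    and Y_meas: "\<And>t. Y t \<in> M \<rightarrow>\<^sub>M count_space UNIV"
    and X_meas: "\<And>t. X t \<in> borel_measurable M"
    and f_meas: "\<And>th. th \<in> Theta \<Longrightarrow> (\<lambda>(y, x). f th y x) \<in> borel_measurable
                   (PiM UNIV (\<lambda>_. count_space UNIV) \<Otimes>\<^sub>M PiM UNIV (\<lambda>_. borel))"
    and f_nonneg: "\<And>th y x. th \<in> Theta \<Longrightarrow> f th y x \<ge> 0"
    \<comment> \<open>g(.|e) is a pmf on N_0\<close>
    and g_pmf: "\<And>y e. g y e \<ge> 0" "\<And>e. (\<lambda>y. g y e) sums 1"
    \<comment> \<open>conditional law of Y_t given F_{t-1} and conditional mean\<close>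
    and cond_law: "\<And>t y. AE w in M. real_cond_exp M (past_sigma M Y X (t - 1))
                      (\<lambda>w. indicator {w. Y t w = y} w) w = g y (eta (lam f Y X t theta0 w))"
    and cond_mean: "\<And>t. AE w in M. real_cond_exp M (past_sigma M Y X (t - 1))
                      (\<lambda>w. real (Y t w)) w = lam f Y X t theta0 w"
    and ident_distr: "\<And>t. distr M (count_space UNIV) (Y t) = distr M (count_space UNIV) (Y 0)"
    and support: "\<And>t w th th'. th \<in> Theta \<Longrightarrow> th' \<in> Theta \<Longrightarrow>
                   {y. g y (eta (lam f Y X t th w)) \<noteq> 0} = {y. g y (eta (lam f Y X t th' w)) \<noteq> 0}"
    and stat_erg: "stationary_ergodic M (count_space UNIV \<Otimes>\<^sub>M borel \<Otimes>\<^sub>M borel)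
                     (\<lambda>t w. (Y t w, lam f Y X t theta0 w, X t w))"
    \<comment> \<open>moment condition (M) with eps > 2\<close>
    and eps: "eps > 2"
    and moment: "C > 0" "\<And>t. (\<integral>\<^sup>+ w. ennreal (max (real (Y t w)) (max \<bar>lam f Y X t theta0 w\<bar> (supn (X t w)))
                      powr (1 + eps)) \<partial>M) < ennreal C"
    \<comment> \<open>A_0(Theta)\<close>
    and f_cont: "\<And>y x. continuous_on Theta (\<lambda>th. f th y x)"
    and f_zero: "\<exists>B. \<forall>th \<in> Theta. \<bar>f th (\<lambda>_. 0) (\<lambda>_. 0)\<bar> \<le> B"
    and alpha0_nonneg: "\<And>k. alpha0 k \<ge> 0"
    and alpha0_sum: "summable alpha0" "suminf alpha0 < 1"
    and f_lip: "\<And>y x y' x'. summable (\<lambda>k. alpha0 k * (\<bar>real (y k) - real (y' k)\<bar> + supn (x k - x' k))) \<Longrightarrow>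
                 \<forall>th \<in> Theta. \<bar>f th y x - f th y' x'\<bar>
                    \<le> (\<Sum>k. alpha0 k * (\<bar>real (y k) - real (y' k)\<bar> + supn (x k - x' k)))"
    \<comment> \<open>(A0)\<close>
    and A0_ident: "\<And>th th'. th \<in> Theta \<Longrightarrow> th' \<in> Theta \<Longrightarrow>
                    (\<exists>t. AE w in M. lam f Y X t th w = lam f Y X t th' w) \<Longrightarrow> th = th'"
    and A0_lower: "cbar > 0" "\<And>th y x. th \<in> Theta \<Longrightarrow> f th y x \<ge> cbar"
    \<comment> \<open>(A1)\<close>
    and A1: "theta0 \<in> interior Theta"
    \<comment> \<open>(A2)\<close>
    and A2: "\<exists>L. L < \<infinity> \<and> (\<forall>t::int. t \<ge> 1 \<longrightarrow>
               (\<integral>\<^sup>+ w. (SUP th \<in> Theta. ennreal \<bar>lam f Y X t th w\<bar>) ^ 4 \<partial>M) = L)"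
    \<comment> \<open>(A3)\<close>
    and A3_C2: "\<And>y. \<exists>g1 g2. (\<forall>e. (g y has_real_derivative g1 e) (at e)) \<and>
                      (\<forall>e. (g1 has_real_derivative g2 e) (at e)) \<and> continuous_on UNIV g2"
    and A3_inj: "\<And>e e'. (\<forall>y. g y e = g y e') \<Longrightarrow> e = e'"
    \<comment> \<open>(A4)\<close>
    and A4_def: "\<And>e. summable (\<lambda>y. \<bar>deriv (g y) e\<bar>)"
    and A4: "\<And>t::nat. t \<ge> 1 \<Longrightarrow> phibar t > 0 \<and> (\<forall>\<delta> \<in> {0..1::real}.
               (\<integral>\<^sup>+ w. (SUP th \<in> Theta. ennreal (phi_fun g
                   (\<delta> * eta (lam f Y X (int t) th w) + (1 - \<delta>) * eta (lamhat f Y X (int t) th w)))) ^ 2 \<partial>M)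
               \<le> ennreal ((phibar t)\<^sup>2))"
    \<comment> \<open>(A5)\<close>
    and A5: "\<And>t::nat. t \<ge> 1 \<Longrightarrow> psibar t > 0 \<and> (\<forall>\<delta> \<in> {0..1::real}.
               (\<integral>\<^sup>+ w. (SUP th \<in> Theta. ennreal (psi_fun g (Y (int t) w)
                   (\<delta> * eta (lam f Y X (int t) th w) + (1 - \<delta>) * eta (lamhat f Y X (int t) th w)))) ^ 2 \<partial>M)
               \<le> ennreal ((psibar t)\<^sup>2))"
    \<comment> \<open>(A6)\<close>
    and A6: "c_eta > 0" "\<And>u v. u \<ge> cbar \<Longrightarrow> v \<ge> cbar \<Longrightarrow> \<bar>eta u - eta v\<bar> \<le> c_eta * \<bar>u - v\<bar>"
      "inj_on eta {cbar..}"
    \<comment> \<open>decay conditions\<close>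
    and gam: "gam > 1"
    and alpha0_decay: "alpha0 \<in> O(\<lambda>k. real (Suc k) powr (- gam))"
    and sum_cond: "summable (\<lambda>k. real (Suc k) powr (- gam) * max (phibar (Suc k)) (psibar (Suc k)))"
  shows "AE w in M. (\<lambda>n. SUP th \<in> Theta.
            ennreal \<bar>Hn g a Y (\<lambda>t th w. eta (lamhat f Y X t th w)) n th w
                    - Hn g a Y (\<lambda>t th w. eta (lam f Y X t th w)) n th w\<bar>) \<longlonglongrightarrow> 0"
proof -
  interpret prob_space M by (rule prob)
  note [measurable] = Y_meas X_meas
  have [measurable]: "{0..1::real} \<in> sets borel" by simp
  have "\<forall>y. \<exists>h. (\<forall>e. (g y has_real_derivative h e) (at e)) \<and> continuous_on UNIV h"
  proof
    fix y
    obtain g1 g2 where G1: "\<forall>e. (g y has_real_derivative g1 e) (at e)" and G2: "\<forall>e. (g1 has_real_derivative g2 e) (at e)"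
      using A3_C2[of y] by blast
    have "continuous_on UNIV g1"
      using G2 by (metis DERIV_isCont continuous_at_imp_continuous_on)
    then show "\<exists>h. (\<forall>e. (g y has_real_derivative h e) (at e)) \<and> continuous_on UNIV h" using G1 by blast
  qed
  from choice[OF this] obtain g1 where g1: "\<forall>y. (\<forall>e. (g y has_real_derivative g1 y e) (at e)) \<and> continuous_on UNIV (g1 y)"
    by blast
  have gd: "\<And>y e. (g y has_real_derivative g1 y e) (at e)" and gc: "\<And>y. continuous_on UNIV (g1 y)"
    using g1 by auto
  have der: "deriv (g y) = g1 y" for y using gd by (intro ext DERIV_imp_deriv) auto
  have g1s: "summable (\<lambda>y. \<bar>g1 y e\<bar>)" for e using A4_def[of e] by (simp add: der)
  have gcont: "continuous_on UNIV (g y)" for y by (metis DERIV_isCont continuous_at_imp_continuous_on gd)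
  have [measurable]: "g1 y \<in> borel_measurable borel" "g y \<in> borel_measurable borel" for y
    using gc gcont by (auto intro: borel_measurable_continuous_onI)
  have phi_m: "phi_fun g \<in> borel_measurable borel"
    unfolding phi_fun_def[abs_def] der by measurable
  have psi_m: "psi_fun g y \<in> borel_measurable borel" for y
    unfolding psi_fun_def[abs_def] der by measurable
  define etac where "etac x = eta (max x cbar)" for x
  have etac_cont: "continuous_on UNIV etac"
    unfolding continuous_on_iff
  proof (intro ballI allI impI)
    fix x and e :: real assume e: "e > 0"
    show "\<exists>d>0. \<forall>x'\<in>UNIV. dist x' x < d \<longrightarrow> dist (etac x') (etac x) < e"
    proof (intro exI[of _ "e / c_eta"] conjI ballI impI)
      show "e / c_eta > 0" using e A6(1) by simp
      fix x' assume x': "dist x' x < e / c_eta"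
      have "\<bar>etac x' - etac x\<bar> \<le> c_eta * \<bar>max x' cbar - max x cbar\<bar>" unfolding etac_def by (rule A6(2)) auto
      also have "\<dots> \<le> c_eta * \<bar>x' - x\<bar>" using A6(1) by (intro mult_left_mono) (auto simp: max_def)
      also have "\<dots> < e" using x' A6(1) by (simp add: dist_real_def field_simps)
      finally show "dist (etac x') (etac x) < e" by (simp add: dist_real_def)
    qed
  qed
  have etac_m[measurable]: "etac \<in> borel_measurable borel" by (rule borel_measurable_continuous_onI[OF etac_cont])
  define ys where "ys t w = (\<lambda>k::nat. Y (int t - 1 - int k) w)" for t :: nat and w
  define xs where "xs t w = (\<lambda>k::nat. X (int t - 1 - int k) w)" for t :: nat and w
  define ysh where "ysh t w = (\<lambda>k::nat. if int k < int t - 1 then Y (int t - 1 - int k) w else 0)" for t :: nat and w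
  define xsh where "xsh t w = (\<lambda>k::nat. if int k < int t - 1 then X (int t - 1 - int k) w else 0)" for t :: nat and w
  have lam_eq: "lam f Y X (int t) th w = f th (ys t w) (xs t w)" for t th w
    unfolding lam_def ys_def xs_def by simp
  have lamh_eq: "lamhat f Y X (int t) th w = f th (ysh t w) (xsh t w)" for t th w
    unfolding lamhat_def ysh_def xsh_def by simp
  have lam_m: "(\<lambda>w. lam f Y X s th w) \<in> borel_measurable M" if "th \<in> Theta" for s th
    unfolding lam_def by (rule f_comp_meas[OF _ _ f_meas[OF that]]) auto
  have yh_m: "(\<lambda>w. if int k < s - 1 then Y (s - 1 - int k) w else 0) \<in> M \<rightarrow>\<^sub>M count_space UNIV" for k s
    by (cases "int k < s - 1") auto
  have xh_m: "(\<lambda>w. if int k < s - 1 then X (s - 1 - int k) w else 0) \<in> borel_measurable M" for k s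
    by (cases "int k < s - 1") auto
  have lamh_m: "(\<lambda>w. lamhat f Y X s th w) \<in> borel_measurable M" if "th \<in> Theta" for s th
    unfolding lamhat_def by (rule f_comp_meas[OF yh_m xh_m f_meas[OF that]])
  define e1 where "e1 t th w = eta (lam f Y X (int t) th w)" for t :: nat and th w
  define e2 where "e2 t th w = eta (lamhat f Y X (int t) th w)" for t :: nat and th w
  have lam_ge: "cbar \<le> lam f Y X s th w" if "th \<in> Theta" for s th w
    unfolding lam_def by (rule A0_lower(2)[OF that])
  have lamh_ge: "cbar \<le> lamhat f Y X s th w" if "th \<in> Theta" for s th w
    unfolding lamhat_def by (rule A0_lower(2)[OF that])
  have e1c: "e1 t th w = etac (lam f Y X (int t) th w)" if "th \<in> Theta" for t th w
    unfolding e1_def etac_def using lam_ge[OF that] by (simp add: max_absorb1)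
  have e2c: "e2 t th w = etac (lamhat f Y X (int t) th w)" if "th \<in> Theta" for t th w
    unfolding e2_def etac_def using lamh_ge[OF that] by (simp add: max_absorb1)
  have e1_m: "e1 t th \<in> borel_measurable M" if "th \<in> Theta" for t th
  proof -
    have "e1 t th = (\<lambda>w. etac (lam f Y X (int t) th w))" using e1c[OF that] by auto
    then show ?thesis using measurable_compose[OF lam_m[OF that] etac_m] by simp
  qed
  have e2_m: "e2 t th \<in> borel_measurable M" if "th \<in> Theta" for t th
  proof -
    have "e2 t th = (\<lambda>w. etac (lamhat f Y X (int t) th w))" using e2c[OF that] by auto
    then show ?thesis using measurable_compose[OF lamh_m[OF that] etac_m] by simp
  qed
  have e1_cont: "continuous_on Theta (\<lambda>th. e1 t th w)" for t w
  proof -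
    have "continuous_on Theta (\<lambda>th. etac (lam f Y X (int t) th w))"
      unfolding lam_eq by (rule continuous_on_compose2[OF etac_cont f_cont]) auto
    then show ?thesis by (rule continuous_on_eq) (simp add: e1c)
  qed
  have e2_cont: "continuous_on Theta (\<lambda>th. e2 t th w)" for t w
  proof -
    have "continuous_on Theta (\<lambda>th. etac (lamhat f Y X (int t) th w))"
      unfolding lamh_eq by (rule continuous_on_compose2[OF etac_cont f_cont]) auto
    then show ?thesis by (rule continuous_on_eq) (simp add: e2c)
  qed
  define xi where "xi t th w \<delta> = \<delta> * e1 t th w + (1 - \<delta>) * e2 t th w" for t th w and \<delta> :: real
  have xi_cont: "continuous_on Theta (\<lambda>th. xi t th w \<delta>)" for t w \<delta>
    unfolding xi_def by (intro continuous_intros e1_cont e2_cont)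
  have xi_m: "(\<lambda>x. xi t th (fst x) (snd x)) \<in> borel_measurable (M \<Otimes>\<^sub>M lborel)" if "th \<in> Theta" for t th
  proof -
    note [measurable] = e1_m[OF that, of t] e2_m[OF that, of t]
    show ?thesis unfolding xi_def by measurable
  qed
  obtain D where D: "countable D" "D \<subseteq> Theta" "Theta \<subseteq> closure D"
    by (rule countable_dense_subset)
  define Phi where "Phi t w \<delta> = (SUP th\<in>Theta. ennreal (phi_fun g (xi t th w \<delta>)))" for t w \<delta>
  define Psi where "Psi t w \<delta> = (SUP th\<in>Theta. ennreal (psi_fun g (Y (int t) w) (xi t th w \<delta>)))" for t w \<delta>
  have den: "g y e + inverse (real (Suc N)) \<noteq> 0" for y e N
  proof -
    have "0 < g y e + inverse (real (Suc N))" by (intro add_nonneg_pos g_pmf(1)) simp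
    then show ?thesis by simp
  qed
  have den': "g y e + inverse (1 + real N) \<noteq> 0" for y e N using den[of y e N] by simp
  have Phi_D: "Phi t w \<delta> = (SUP th\<in>D. ennreal (phi_fun g (xi t th w \<delta>)))" for t w \<delta>
    unfolding Phi_def
  proof (rule sup_dense_eq[OF D(2,3), where h="\<lambda>N th. \<Sum>y<N. \<bar>g1 y (xi t th w \<delta>)\<bar>"])
    show "continuous_on Theta (\<lambda>th. \<Sum>y<N. \<bar>g1 y (xi t th w \<delta>)\<bar>)" for N
      by (intro continuous_on_sum continuous_on_rabs continuous_on_compose2[OF gc xi_cont]) auto
    show "ennreal (phi_fun g (xi t th w \<delta>)) = (SUP N. ennreal (\<Sum>y<N. \<bar>g1 y (xi t th w \<delta>)\<bar>))" for th
      unfolding phi_fun_def der by (rule phi_sup[OF g1s])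
  qed
  have Psi_D: "Psi t w \<delta> = (SUP th\<in>D. ennreal (psi_fun g (Y (int t) w) (xi t th w \<delta>)))" for t w \<delta>
    unfolding Psi_def
  proof (rule sup_dense_eq[OF D(2,3), where h="\<lambda>N th. \<bar>g1 (Y (int t) w) (xi t th w \<delta>)\<bar> / (g (Y (int t) w) (xi t th w \<delta>) + inverse (real (Suc N)))"])
    show "continuous_on Theta (\<lambda>th. \<bar>g1 (Y (int t) w) (xi t th w \<delta>)\<bar> / (g (Y (int t) w) (xi t th w \<delta>) + inverse (real (Suc N))))" for N
      by (intro continuous_on_divide continuous_on_add continuous_on_const continuous_on_rabs
          continuous_on_compose2[OF gc xi_cont] continuous_on_compose2[OF gcont xi_cont]) (auto simp: den den')
    show "ennreal (psi_fun g (Y (int t) w) (xi t th w \<delta>)) = (SUP N. ennreal (\<bar>g1 (Y (int t) w) (xi t th w \<delta>)\<bar> / (g (Y (int t) w) (xi t th w \<delta>) + inverse (real (Suc N)))))" for th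
      unfolding psi_fun_def der by (rule psi_sup[OF g_pmf(1) gd])
  qed
  have Phi_m: "(\<lambda>(w, \<delta>). Phi t w \<delta>) \<in> borel_measurable (M \<Otimes>\<^sub>M lborel)" for t
  proof -
    have "(\<lambda>x. SUP th\<in>D. ennreal (phi_fun g (xi t th (fst x) (snd x)))) \<in> borel_measurable (M \<Otimes>\<^sub>M lborel)"
    proof (rule borel_measurable_SUP[OF D(1)])
      fix th assume "th \<in> D"
      then have "th \<in> Theta" using D(2) by auto
      note [measurable] = measurable_compose[OF xi_m[OF this] phi_m]
      show "(\<lambda>x. ennreal (phi_fun g (xi t th (fst x) (snd x)))) \<in> borel_measurable (M \<Otimes>\<^sub>M lborel)"
        by measurable
    qed
    moreover have "(\<lambda>(w, \<delta>). Phi t w \<delta>) = (\<lambda>x. SUP th\<in>D. ennreal (phi_fun g (xi t th (fst x) (snd x))))"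
      by (auto simp: Phi_D fun_eq_iff)
    ultimately show ?thesis by simp
  qed
  have Psi_m: "(\<lambda>(w, \<delta>). Psi t w \<delta>) \<in> borel_measurable (M \<Otimes>\<^sub>M lborel)" for t
  proof -
    have "(\<lambda>x. SUP th\<in>D. ennreal (psi_fun g (Y (int t) (fst x)) (xi t th (fst x) (snd x)))) \<in> borel_measurable (M \<Otimes>\<^sub>M lborel)"
    proof (rule borel_measurable_SUP[OF D(1)])
      fix th assume "th \<in> D"
      then have th: "th \<in> Theta" using D(2) by auto
      show "(\<lambda>x. ennreal (psi_fun g (Y (int t) (fst x)) (xi t th (fst x) (snd x)))) \<in> borel_measurable (M \<Otimes>\<^sub>M lborel)"
      proof (rule measurable_compose_countable'[where I=UNIV and g="\<lambda>x. Y (int t) (fst x)"])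
        fix y :: nat
        note [measurable] = measurable_compose[OF xi_m[OF th] psi_m[of y]]
        show "(\<lambda>x. ennreal (psi_fun g y (xi t th (fst x) (snd x)))) \<in> borel_measurable (M \<Otimes>\<^sub>M lborel)"
          by measurable
      next
        show "(\<lambda>x. Y (int t) (fst x)) \<in> M \<Otimes>\<^sub>M lborel \<rightarrow>\<^sub>M count_space UNIV"
          by (rule measurable_compose[OF measurable_fst]) simp
      qed simp
    qed
    moreover have "(\<lambda>(w, \<delta>). Psi t w \<delta>) = (\<lambda>x. SUP th\<in>D. ennreal (psi_fun g (Y (int t) (fst x)) (xi t th (fst x) (snd x))))"
      by (auto simp: Psi_D fun_eq_iff)
    ultimately show ?thesis by simp
  qed
  define tm where "tm t k w = \<bar>real (ysh t w k) - real (ys t w k)\<bar> + supn (xsh t w k - xs t w k)" for t k w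
  have tm_low: "tm t k w = 0" if "int k < int t - 1" for t k w
    using that by (simp add: tm_def ysh_def ys_def xsh_def xs_def supn_zero)
  have tm_high: "tm t k w = real (Y (int t - 1 - int k) w) + supn (X (int t - 1 - int k) w)" if "\<not> int k < int t - 1" for t k w
    using that by (simp add: tm_def ysh_def ys_def xsh_def xs_def supn_uminus)
  have tm0: "0 \<le> tm t k w" for t k w
    unfolding tm_def by (intro add_nonneg_nonneg abs_ge_zero supn_nonneg)
  note supn_meas[measurable]
  have tm_m[measurable]: "tm t k \<in> borel_measurable M" for t k
  proof (cases "int k < int t - 1")
    case True
    then have "tm t k = (\<lambda>_. 0)" by (auto simp: tm_low)
    then show ?thesis by simp
  next
    case False
    then have "tm t k = (\<lambda>w. real (Y (int t - 1 - int k) w) + supn (X (int t - 1 - int k) w))" by (auto simp: tm_high)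
    then show ?thesis by simp
  qed
  define Km where "Km = 4 * (1 + C)"
  have Km0: "Km \<ge> 0" using moment(1) by (simp add: Km_def)
  have lam0_m[measurable]: "(\<lambda>w. lam f Y X s theta0 w) \<in> borel_measurable M" for s
    by (rule lam_m[OF theta0])
  have V2: "(\<integral>\<^sup>+ w. ennreal ((real (Y s w) + supn (X s w))^2) \<partial>M) \<le> ennreal Km" for s
  proof -
    define m where "m w = max (real (Y s w)) (max \<bar>lam f Y X s theta0 w\<bar> (supn (X s w)))" for w
    have m_m[measurable]: "m \<in> borel_measurable M" unfolding m_def by measurable
    have m0: "m w \<ge> 0" for w unfolding m_def by simp
    have pw: "(real (Y s w) + supn (X s w))^2 \<le> 4 + 4 * (m w powr (1 + eps))" for w
    proof -
      have a1: "real (Y s w) + supn (X s w) \<le> 2 * m w" unfolding m_def by simp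
      have a0: "0 \<le> real (Y s w) + supn (X s w)" using supn_nonneg[of "X s w"] by simp
      have "(real (Y s w) + supn (X s w))^2 \<le> (2 * m w)^2" using a1 a0 by (rule power_mono)
      also have "\<dots> = 4 * (m w)^2" by (simp add: power2_eq_square)
      also have "(m w)^2 \<le> 1 + m w powr (1 + eps)"
      proof (cases "m w \<le> 1")
        case True
        then have "(m w)^2 \<le> 1" using m0 by (simp add: power_le_one)
        moreover have "0 \<le> m w powr (1 + eps)" by simp
        ultimately show ?thesis by linarith
      next
        case False
        then have "(m w)^2 = m w powr 2" using m0[of w] by (simp only: powr_numeral)
        also have "\<dots> \<le> m w powr (1 + eps)" using False eps by (intro powr_mono) auto
        finally show ?thesis by simp
      qed
      finally show ?thesis by simp
    qed
    have "(\<integral>\<^sup>+ w. ennreal ((real (Y s w) + supn (X s w))^2) \<partial>M) \<le> (\<integral>\<^sup>+ w. ennreal 4 + ennreal 4 * ennreal (m w powr (1 + eps)) \<partial>M)"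
    proof (rule nn_integral_mono)
      fix w
      have "ennreal ((real (Y s w) + supn (X s w))^2) \<le> ennreal (4 + 4 * (m w powr (1 + eps)))"
        by (rule ennreal_leI[OF pw])
      also have "\<dots> = ennreal 4 + ennreal 4 * ennreal (m w powr (1 + eps))"
      proof -
        have q1: "ennreal (4 + 4 * (m w powr (1 + eps))) = ennreal 4 + ennreal (4 * (m w powr (1 + eps)))"
          by (rule ennreal_plus) auto
        have q2: "ennreal (4 * (m w powr (1 + eps))) = ennreal 4 * ennreal (m w powr (1 + eps))"
          by (rule ennreal_mult) auto
        show ?thesis unfolding q1 q2 ..
      qed
      finally show "ennreal ((real (Y s w) + supn (X s w))^2) \<le> ennreal 4 + ennreal 4 * ennreal (m w powr (1 + eps))" .
    qed
    also have "\<dots> = ennreal 4 + ennreal 4 * (\<integral>\<^sup>+ w. ennreal (m w powr (1 + eps)) \<partial>M)"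
      by (subst nn_integral_add) (auto simp: nn_integral_cmult emeasure_space_1)
    also have "\<dots> \<le> ennreal 4 + ennreal 4 * ennreal C"
      using moment(2)[of s] unfolding m_def by (intro add_left_mono mult_left_mono) auto
    also have "\<dots> = ennreal Km"
    proof -
      have q1: "ennreal (4 + 4 * C) = ennreal 4 + ennreal (4 * C)" by (rule ennreal_plus) (use moment(1) in auto)
      have q2: "ennreal (4 * C) = ennreal 4 * ennreal C" by (rule ennreal_mult) (use moment(1) in auto)
      have Kmeq: "Km = 4 + 4 * C" by (simp add: Km_def)
      show ?thesis by (simp only: Kmeq q1 q2)
    qed
    finally show ?thesis .
  qed
  have tm2: "(\<integral>\<^sup>+ w. ennreal ((tm t k w)^2) \<partial>M) \<le> ennreal Km" for t k
  proof (cases "int k < int t - 1")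
    case True then show ?thesis by (simp add: tm_low)
  next
    case False then show ?thesis using V2[of "int t - 1 - int k"] by (simp add: tm_high)
  qed
  have tm1: "(\<integral>\<^sup>+ w. ennreal (tm t k w) \<partial>M) \<le> ennreal (1 + Km)" for t k
  proof -
    have "(\<integral>\<^sup>+ w. ennreal (tm t k w) \<partial>M) \<le> (\<integral>\<^sup>+ w. 1 + ennreal ((tm t k w)^2) \<partial>M)"
    proof (rule nn_integral_mono)
      fix w
      have h: "0 \<le> (tm t k w - 1)^2" by simp
      have h2: "(tm t k w - 1)^2 = (tm t k w)^2 + 1 - 2 * tm t k w" by (simp add: power2_diff)
      have "tm t k w \<le> 1 + (tm t k w)^2" using h h2 tm0[of t k w] by linarith
      then have "ennreal (tm t k w) \<le> ennreal (1 + (tm t k w)^2)" by (rule ennreal_leI)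
      moreover have "ennreal (1 + (tm t k w)^2) = 1 + ennreal ((tm t k w)^2)" by (subst ennreal_plus) auto
      ultimately show "ennreal (tm t k w) \<le> 1 + ennreal ((tm t k w)^2)" by simp
    qed
    also have "\<dots> = 1 + (\<integral>\<^sup>+ w. ennreal ((tm t k w)^2) \<partial>M)"
      by (subst nn_integral_add) (auto simp: emeasure_space_1)
    also have "\<dots> \<le> 1 + ennreal Km" by (intro add_left_mono tm2)
    also have "\<dots> = ennreal (1 + Km)" using Km0 by (subst ennreal_plus) auto
    finally show ?thesis .
  qed
  define Zf where "Zf t w = (\<Sum>k. ennreal (alpha0 k * tm t k w))" for t w
  have Zf_m[measurable]: "Zf t \<in> borel_measurable M" for t unfolding Zf_def by measurable
  obtain Kt where Kt: "Kt > 0" "summable alpha0" "\<And>m. summable (\<lambda>k. alpha0 (k + m))"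
      "\<And>m. (\<Sum>k. alpha0 (k + m)) \<le> Kt * real (Suc m) powr (1 - gam)"
    using tail_bound[OF alpha0_nonneg gam alpha0_decay] by blast
  have EZ: "(\<integral>\<^sup>+ w. Zf t w \<partial>M) \<noteq> \<top>" for t
  proof -
    have "(\<integral>\<^sup>+ w. Zf t w \<partial>M) = (\<Sum>k. (\<integral>\<^sup>+ w. ennreal (alpha0 k) * ennreal (tm t k w) \<partial>M))"
      unfolding Zf_def by (subst nn_integral_suminf[symmetric]) (auto simp: ennreal_mult alpha0_nonneg tm0)
    also have "\<dots> = (\<Sum>k. ennreal (alpha0 k) * (\<integral>\<^sup>+ w. ennreal (tm t k w) \<partial>M))"
      by (simp add: nn_integral_cmult)
    also have "\<dots> \<le> (\<Sum>k. ennreal (alpha0 k) * ennreal (1 + Km))"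
      by (intro suminf_le mult_left_mono tm1) auto
    also have "\<dots> = (\<Sum>k. ennreal (alpha0 k)) * ennreal (1 + Km)" by simp
    also have "\<dots> = ennreal (\<Sum>k. alpha0 k) * ennreal (1 + Km)"
      using Kt(2) alpha0_nonneg by (simp add: suminf_ennreal2)
    also have "\<dots> < \<top>" by (simp add: ennreal_mult_less_top)
    finally show ?thesis by simp
  qed
  have AEZ1: "AE w in M. Zf t w \<noteq> \<top>" for t
    using nn_integral_PInf_AE[OF Zf_m[of t]] EZ[of t] by simp
  have AEZ: "AE w in M. \<forall>t. Zf t w \<noteq> \<top>"
    by (subst AE_all_countable) (simp add: AEZ1)
  define IPhi where "IPhi t w = (\<integral>\<^sup>+ \<delta>. Phi t w \<delta> * indicator {0..1} \<delta> \<partial>lborel)" for t w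
  define IPsi where "IPsi t w = (\<integral>\<^sup>+ \<delta>. Psi t w \<delta> * indicator {0..1} \<delta> \<partial>lborel)" for t w
  have ind_m: "(\<lambda>x. indicator {0..1::real} (snd x) :: ennreal) \<in> borel_measurable (M \<Otimes>\<^sub>M lborel)"
    by (intro measurable_compose[OF measurable_snd borel_measurable_indicator]) simp
  have IPhi_m[measurable]: "IPhi t \<in> borel_measurable M" for t
  proof -
    have "(\<lambda>x. (\<lambda>(w, \<delta>). Phi t w \<delta>) x * indicator {0..1} (snd x)) \<in> borel_measurable (M \<Otimes>\<^sub>M lborel)"
      by (intro borel_measurable_times_ennreal Phi_m ind_m)
    moreover have "(\<lambda>x. (\<lambda>(w, \<delta>). Phi t w \<delta>) x * indicator {0..1} (snd x)) = (\<lambda>(w, \<delta>). Phi t w \<delta> * indicator {0..1} \<delta>)"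
      by (auto simp: fun_eq_iff)
    ultimately have "(\<lambda>(w, \<delta>). Phi t w \<delta> * indicator {0..1} \<delta>) \<in> borel_measurable (M \<Otimes>\<^sub>M lborel)" by simp
    then show ?thesis unfolding IPhi_def by (rule lborel.borel_measurable_nn_integral)
  qed
  have IPsi_m[measurable]: "IPsi t \<in> borel_measurable M" for t
  proof -
    have "(\<lambda>x. (\<lambda>(w, \<delta>). Psi t w \<delta>) x * indicator {0..1} (snd x)) \<in> borel_measurable (M \<Otimes>\<^sub>M lborel)"
      by (intro borel_measurable_times_ennreal Psi_m ind_m)
    moreover have "(\<lambda>x. (\<lambda>(w, \<delta>). Psi t w \<delta>) x * indicator {0..1} (snd x)) = (\<lambda>(w, \<delta>). Psi t w \<delta> * indicator {0..1} \<delta>)"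
      by (auto simp: fun_eq_iff)
    ultimately have "(\<lambda>(w, \<delta>). Psi t w \<delta> * indicator {0..1} \<delta>) \<in> borel_measurable (M \<Otimes>\<^sub>M lborel)" by simp
    then show ?thesis unfolding IPsi_def by (rule lborel.borel_measurable_nn_integral)
  qed
  define K0 where "K0 = (1 + a) * 2 powr a * c_eta"
  have K0: "K0 > 0" unfolding K0_def using a_pos A6(1) by simp
  define B where "B t w = ennreal K0 * (Zf t w * IPhi t w + Zf t w * IPsi t w)" for t w
  have B_m[measurable]: "B t \<in> borel_measurable M" for t unfolding B_def by measurable
  define aa where "aa t k = (if t - 1 \<le> k then alpha0 k else 0)" for t k :: nat
  have aa0: "0 \<le> aa t k" for t k by (simp add: aa_def alpha0_nonneg)
  have Zf_aa: "Zf t w = (\<Sum>k. ennreal (aa t k * tm t k w))" if "t \<ge> 1" for t w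
    unfolding Zf_def
  proof (rule suminf_cong)
    fix k show "ennreal (alpha0 k * tm t k w) = ennreal (aa t k * tm t k w)"
      using that tm_low[of k t w] by (auto simp: aa_def)
  qed
  have php: "phibar t > 0" "psibar t > 0" if "t \<ge> 1" for t using A4[OF that] A5[OF that] by auto
  have EZP: "(\<integral>\<^sup>+ w. Zf t w * IPhi t w \<partial>M) \<le> (\<Sum>k. ennreal (aa t k)) * ennreal (phibar t * (Km + 1) / 2)" if t1: "t \<ge> 1" for t
  proof -
    have "(\<integral>\<^sup>+ w. Zf t w * IPhi t w \<partial>M) = (\<integral>\<^sup>+ w. (\<Sum>k. ennreal (aa t k * tm t k w)) * (\<integral>\<^sup>+ \<delta>. Phi t w \<delta> * indicator {0..1} \<delta> \<partial>lborel) \<partial>M)"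
      by (simp add: Zf_aa[OF t1] IPhi_def)
    also have "\<dots> \<le> (\<Sum>k. ennreal (aa t k)) * ennreal (phibar t * (Km + 1) / 2)"
    proof (rule expect_bound[OF prob Phi_m _ php(1)[OF t1] tm_m tm0 tm2 Km0 aa0])
      fix \<delta> :: real assume "\<delta> \<in> {0..1}"
      then show "(\<integral>\<^sup>+ w. (Phi t w \<delta>)^2 \<partial>M) \<le> ennreal ((phibar t)^2)"
        using A4[OF t1] unfolding Phi_def xi_def e1_def e2_def by auto
    qed
    finally show ?thesis .
  qed
  have EZS: "(\<integral>\<^sup>+ w. Zf t w * IPsi t w \<partial>M) \<le> (\<Sum>k. ennreal (aa t k)) * ennreal (psibar t * (Km + 1) / 2)" if t1: "t \<ge> 1" for t
  proof -
    have "(\<integral>\<^sup>+ w. Zf t w * IPsi t w \<partial>M) = (\<integral>\<^sup>+ w. (\<Sum>k. ennreal (aa t k * tm t k w)) * (\<integral>\<^sup>+ \<delta>. Psi t w \<delta> * indicator {0..1} \<delta> \<partial>lborel) \<partial>M)"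
      by (simp add: Zf_aa[OF t1] IPsi_def)
    also have "\<dots> \<le> (\<Sum>k. ennreal (aa t k)) * ennreal (psibar t * (Km + 1) / 2)"
    proof (rule expect_bound[OF prob Psi_m _ php(2)[OF t1] tm_m tm0 tm2 Km0 aa0])
      fix \<delta> :: real assume "\<delta> \<in> {0..1}"
      then show "(\<integral>\<^sup>+ w. (Psi t w \<delta>)^2 \<partial>M) \<le> ennreal ((psibar t)^2)"
        using A5[OF t1] unfolding Psi_def xi_def e1_def e2_def by auto
    qed
    finally show ?thesis .
  qed
  have At: "(\<Sum>k. ennreal (aa t k)) \<le> ennreal (Kt * real t powr (1 - gam))" if t1: "t \<ge> 1" for t
  proof -
    have sa: "summable (aa t)"
      by (rule summable_comparison_test'[OF Kt(2)]) (auto simp: aa_def alpha0_nonneg)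
    have "(\<Sum>k. aa t k) = (\<Sum>k. aa t (k + (t - 1))) + (\<Sum>i<t-1. aa t i)"
      by (rule suminf_split_initial_segment[OF sa])
    also have "(\<Sum>i<t-1. aa t i) = 0" by (simp add: aa_def)
    also have "(\<Sum>k. aa t (k + (t - 1))) = (\<Sum>k. alpha0 (k + (t - 1)))" by (simp add: aa_def)
    also have "\<dots> \<le> Kt * real (Suc (t - 1)) powr (1 - gam)" by (rule Kt(4))
    also have "real (Suc (t - 1)) = real t" using t1 by simp
    finally have r: "(\<Sum>k. aa t k) \<le> Kt * real t powr (1 - gam)" by simp
    have "(\<Sum>k. ennreal (aa t k)) = ennreal (\<Sum>k. aa t k)" using sa aa0 by (intro suminf_ennreal2) auto
    then show ?thesis using r by (simp add: ennreal_leI)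
  qed
  have EB: "(\<integral>\<^sup>+ w. B t w \<partial>M) \<le> ennreal (K0 * (Kt * real t powr (1 - gam)) * ((Km + 1) * max (phibar t) (psibar t)))" if t1: "t \<ge> 1" for t
  proof -
    let ?A = "\<Sum>k. ennreal (aa t k)"
    have "(\<integral>\<^sup>+ w. B t w \<partial>M) = ennreal K0 * ((\<integral>\<^sup>+ w. Zf t w * IPhi t w \<partial>M) + (\<integral>\<^sup>+ w. Zf t w * IPsi t w \<partial>M))"
      unfolding B_def by (simp add: nn_integral_cmult nn_integral_add)
    also have "\<dots> \<le> ennreal K0 * (?A * ennreal (phibar t * (Km + 1) / 2) + ?A * ennreal (psibar t * (Km + 1) / 2))"
      by (intro mult_left_mono add_mono EZP EZS t1) auto
    also have "\<dots> = ennreal K0 * (?A * ennreal ((Km + 1) * ((phibar t + psibar t) / 2)))"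
    proof -
      have "ennreal (phibar t * (Km + 1) / 2) + ennreal (psibar t * (Km + 1) / 2) = ennreal ((Km + 1) * ((phibar t + psibar t) / 2))"
        using php[OF t1] Km0 by (subst ennreal_plus[symmetric]) (auto simp: field_simps)
      then show ?thesis by (simp add: distrib_left[symmetric])
    qed
    also have "\<dots> \<le> ennreal K0 * (ennreal (Kt * real t powr (1 - gam)) * ennreal ((Km + 1) * max (phibar t) (psibar t)))"
    proof -
      have r: "(Km + 1) * ((phibar t + psibar t) / 2) \<le> (Km + 1) * max (phibar t) (psibar t)"
        using Km0 by (intro mult_left_mono) auto
      have "?A * ennreal ((Km + 1) * ((phibar t + psibar t) / 2)) \<le> ennreal (Kt * real t powr (1 - gam)) * ennreal ((Km + 1) * max (phibar t) (psibar t))"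
        by (rule mult_mono[OF At[OF t1] ennreal_leI[OF r]]) auto
      then show ?thesis by (rule mult_left_mono) simp
    qed
    also have "\<dots> = ennreal (K0 * (Kt * real t powr (1 - gam)) * ((Km + 1) * max (phibar t) (psibar t)))"
      using K0 Kt(1) Km0 php[OF t1] by (simp add: ennreal_mult[symmetric] mult.assoc)
    finally show ?thesis .
  qed
  define bt where "bt t = K0 * Kt * (Km + 1) * (real (Suc t) powr (- gam) * max (phibar (Suc t)) (psibar (Suc t)))" for t
  have bt_s: "summable bt" unfolding bt_def by (intro summable_mult sum_cond)
  have bt0: "0 \<le> bt t" for t
    unfolding bt_def using K0 Kt(1) Km0 php[of "Suc t"] by (intro mult_nonneg_nonneg) auto
  define SB where "SB w = (\<Sum>t. B (Suc t) w * ennreal (1 / real (Suc t)))" for w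
  have SB_m: "SB \<in> borel_measurable M" unfolding SB_def by measurable
  have ESB: "(\<integral>\<^sup>+ w. SB w \<partial>M) \<noteq> \<top>"
  proof -
    have "(\<integral>\<^sup>+ w. SB w \<partial>M) = (\<Sum>t. (\<integral>\<^sup>+ w. B (Suc t) w \<partial>M) * ennreal (1 / real (Suc t)))"
      unfolding SB_def by (subst nn_integral_suminf) (auto simp: nn_integral_multc)
    also have "\<dots> \<le> (\<Sum>t. ennreal (bt t))"
    proof (intro suminf_le)
      fix t
      let ?E = "K0 * (Kt * real (Suc t) powr (1 - gam)) * ((Km + 1) * max (phibar (Suc t)) (psibar (Suc t)))"
      have "(\<integral>\<^sup>+ w. B (Suc t) w \<partial>M) * ennreal (1 / real (Suc t)) \<le> ennreal ?E * ennreal (1 / real (Suc t))"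
        by (intro mult_right_mono EB) auto
      also have "\<dots> = ennreal (?E * (1 / real (Suc t)))"
        by (rule ennreal_mult[symmetric]) (use K0 Kt(1) Km0 php[of "Suc t"] in auto)
      also have "?E * (1 / real (Suc t)) = bt t"
      proof -
        have "real (Suc t) powr (1 - gam) = real (Suc t) * real (Suc t) powr (- gam)"
          using powr_add[of "real (Suc t)" 1 "- gam"] by simp
        then show ?thesis unfolding bt_def by (simp add: field_simps)
      qed
      finally show "(\<integral>\<^sup>+ w. B (Suc t) w \<partial>M) * ennreal (1 / real (Suc t)) \<le> ennreal (bt t)" .
    qed auto
    also have "\<dots> = ennreal (\<Sum>t. bt t)" using bt_s bt0 by (intro suminf_ennreal2) auto
    also have "\<dots> < \<top>" by simp
    finally show ?thesis by simp
  qed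
  have AESB: "AE w in M. SB w \<noteq> \<top>" using nn_integral_PInf_AE[OF SB_m] ESB by simp
  have AEgood: "AE w in M. (\<forall>t. Zf t w \<noteq> \<top>) \<and> SB w \<noteq> \<top>"
    using AEZ AESB by eventually_elim auto
  show ?thesis
    using AEgood
  proof (rule eventually_mono)
    fix w assume good: "(\<forall>t. Zf t w \<noteq> \<top>) \<and> SB w \<noteq> \<top>"
    define \<beta> where "\<beta> t = enn2real (B t w)" for t
    have Bfin: "B (Suc t) w \<noteq> \<top>" for t
    proof -
      have "SB w < \<top>" using good by (simp add: top.not_eq_extremum)
      then have "B (Suc t) w * ennreal (1 / real (Suc t)) < \<top>"
        unfolding SB_def by (rule ennreal_suminf_lessD)
      then show ?thesis by (auto simp: ennreal_mult_less_top top.not_eq_extremum)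
    qed
    have Bb: "B (Suc t) w = ennreal (\<beta> (Suc t))" for t using Bfin[of t] unfolding \<beta>_def by (simp add: ennreal_enn2real_if)
    have b0: "0 \<le> \<beta> t" for t by (simp add: \<beta>_def)
    have bs: "summable (\<lambda>t. \<beta> (Suc t) / real (Suc t))"
    proof (rule summable_suminf_not_top)
      show "0 \<le> \<beta> (Suc t) / real (Suc t)" for t using b0 by simp
      have "(\<Sum>t. ennreal (\<beta> (Suc t) / real (Suc t))) = SB w"
        unfolding SB_def
      proof (rule suminf_cong)
        fix t
        have "ennreal (\<beta> (Suc t) / real (Suc t)) = ennreal (\<beta> (Suc t) * (1 / real (Suc t)))" by simp
        also have "\<dots> = ennreal (\<beta> (Suc t)) * ennreal (1 / real (Suc t))" using b0 by (intro ennreal_mult) auto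
        finally show "ennreal (\<beta> (Suc t) / real (Suc t)) = B (Suc t) w * ennreal (1 / real (Suc t))" by (simp add: Bb)
      qed
      then show "(\<Sum>t. ennreal (\<beta> (Suc t) / real (Suc t))) \<noteq> \<top>" using good by simp
    qed
    have kr: "(\<lambda>n. (\<Sum>t=1..n. \<beta> t) / real n) \<longlonglongrightarrow> 0" by (rule kronecker[OF b0 bs])
    have pt: "\<bar>dpd g a (Y (int t) w) (e2 t th w) - dpd g a (Y (int t) w) (e1 t th w)\<bar> \<le> \<beta> t"
      if t1: "t \<ge> 1" and th: "th \<in> Theta" for t th
    proof -
      from good have Zfin: "Zf t w \<noteq> \<top>" by auto
      have sZ: "summable (\<lambda>k. alpha0 k * tm t k w)"
        using Zfin unfolding Zf_def by (intro summable_suminf_not_top) (auto simp: alpha0_nonneg tm0)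
      define Zr where "Zr = (\<Sum>k. alpha0 k * tm t k w)"
      have Zr0: "0 \<le> Zr" unfolding Zr_def using sZ by (intro suminf_nonneg) (auto simp: alpha0_nonneg tm0)
      have ZfZr: "Zf t w = ennreal Zr" unfolding Zf_def Zr_def using sZ by (intro suminf_ennreal2) (auto simp: alpha0_nonneg tm0)
      have lip: "\<bar>lamhat f Y X (int t) th w - lam f Y X (int t) th w\<bar> \<le> Zr"
      proof -
        have "\<forall>th\<in>Theta. \<bar>f th (ysh t w) (xsh t w) - f th (ys t w) (xs t w)\<bar>
            \<le> (\<Sum>k. alpha0 k * (\<bar>real (ysh t w k) - real (ys t w k)\<bar> + supn (xsh t w k - xs t w k)))"
          by (rule f_lip) (use sZ in \<open>simp add: tm_def\<close>)
        then show ?thesis using th by (simp add: lam_eq lamh_eq Zr_def tm_def)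
      qed
      have eta_lip: "\<bar>e1 t th w - e2 t th w\<bar> \<le> c_eta * Zr"
      proof -
        have "\<bar>e1 t th w - e2 t th w\<bar> \<le> c_eta * \<bar>lam f Y X (int t) th w - lamhat f Y X (int t) th w\<bar>"
          unfolding e1_def e2_def by (rule A6(2)) (use lam_ge[OF th] lamh_ge[OF th] in auto)
        also have "\<dots> \<le> c_eta * Zr" using lip A6(1) by (intro mult_left_mono) (auto simp: abs_minus_commute)
        finally show ?thesis .
      qed
      have db: "ennreal \<bar>dpd g a (Y (int t) w) (e2 t th w) - dpd g a (Y (int t) w) (e1 t th w)\<bar>
          \<le> ennreal ((1 + a) * 2 powr a * \<bar>e1 t th w - e2 t th w\<bar>) *
           ((\<integral>\<^sup>+ \<delta>. ennreal (phi_fun g (\<delta> * e1 t th w + (1 - \<delta>) * e2 t th w)) * indicator {0..1} \<delta> \<partial>lborel) +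
            (\<integral>\<^sup>+ \<delta>. ennreal (psi_fun g (Y (int t) w) (\<delta> * e1 t th w + (1 - \<delta>) * e2 t th w)) * indicator {0..1} \<delta> \<partial>lborel))"
        by (rule dpd_bound[OF g_pmf(1) g_pmf(2) gd gc g1s a_pos])
      have I1: "(\<integral>\<^sup>+ \<delta>. ennreal (phi_fun g (\<delta> * e1 t th w + (1 - \<delta>) * e2 t th w)) * indicator {0..1} \<delta> \<partial>lborel) \<le> IPhi t w"
        unfolding IPhi_def Phi_def xi_def by (intro nn_integral_mono mult_right_mono SUP_upper th) auto
      have I2: "(\<integral>\<^sup>+ \<delta>. ennreal (psi_fun g (Y (int t) w) (\<delta> * e1 t th w + (1 - \<delta>) * e2 t th w)) * indicator {0..1} \<delta> \<partial>lborel) \<le> IPsi t w"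
        unfolding IPsi_def Psi_def xi_def by (intro nn_integral_mono mult_right_mono SUP_upper th) auto
      have c: "ennreal ((1 + a) * 2 powr a * \<bar>e1 t th w - e2 t th w\<bar>) \<le> ennreal K0 * Zf t w"
      proof -
        have "(1 + a) * 2 powr a * \<bar>e1 t th w - e2 t th w\<bar> \<le> (1 + a) * 2 powr a * (c_eta * Zr)"
          using eta_lip a_pos by (intro mult_left_mono) auto
        also have "\<dots> = K0 * Zr" unfolding K0_def by simp
        finally have "ennreal ((1 + a) * 2 powr a * \<bar>e1 t th w - e2 t th w\<bar>) \<le> ennreal (K0 * Zr)"
          by (rule ennreal_leI)
        also have "\<dots> = ennreal K0 * Zf t w" using K0 Zr0 by (simp add: ZfZr ennreal_mult)
        finally show ?thesis .
      qed
      have "ennreal \<bar>dpd g a (Y (int t) w) (e2 t th w) - dpd g a (Y (int t) w) (e1 t th w)\<bar>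
          \<le> ennreal K0 * Zf t w * (IPhi t w + IPsi t w)"
        by (rule order_trans[OF db mult_mono[OF c add_mono[OF I1 I2]]]) auto
      also have "\<dots> = B t w" by (simp add: B_def distrib_left mult.assoc)
      finally have le: "ennreal \<bar>dpd g a (Y (int t) w) (e2 t th w) - dpd g a (Y (int t) w) (e1 t th w)\<bar> \<le> B t w" .
      have "B t w \<noteq> \<top>" using Bfin[of "t - 1"] t1 by simp
      then show ?thesis unfolding \<beta>_def using le by (intro enn_le_enn2real) auto
    qed
    have Hb: "ennreal \<bar>Hn g a Y (\<lambda>t th w. eta (lamhat f Y X t th w)) n th w
                    - Hn g a Y (\<lambda>t th w. eta (lam f Y X t th w)) n th w\<bar> \<le> ennreal ((\<Sum>t=1..n. \<beta> t) / real n)"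
      if th: "th \<in> Theta" for n th
    proof -
      have "Hn g a Y (\<lambda>t th w. eta (lamhat f Y X t th w)) n th w - Hn g a Y (\<lambda>t th w. eta (lam f Y X t th w)) n th w
          = (\<Sum>t=1..n. dpd g a (Y (int t) w) (e2 t th w) - dpd g a (Y (int t) w) (e1 t th w)) / real n"
        unfolding Hn_def e1_def e2_def by (simp add: sum_subtractf diff_divide_distrib)
      then have "\<bar>Hn g a Y (\<lambda>t th w. eta (lamhat f Y X t th w)) n th w - Hn g a Y (\<lambda>t th w. eta (lam f Y X t th w)) n th w\<bar>
          = \<bar>\<Sum>t=1..n. dpd g a (Y (int t) w) (e2 t th w) - dpd g a (Y (int t) w) (e1 t th w)\<bar> / real n"
        by simp
      also have "\<dots> \<le> (\<Sum>t=1..n. \<bar>dpd g a (Y (int t) w) (e2 t th w) - dpd g a (Y (int t) w) (e1 t th w)\<bar>) / real n"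
        by (intro divide_right_mono sum_abs) auto
      also have "\<dots> \<le> (\<Sum>t=1..n. \<beta> t) / real n"
        by (intro divide_right_mono sum_mono pt th) auto
      finally show ?thesis by (rule ennreal_leI)
    qed
    show "(\<lambda>n. SUP th \<in> Theta. ennreal \<bar>Hn g a Y (\<lambda>t th w. eta (lamhat f Y X t th w)) n th w
                    - Hn g a Y (\<lambda>t th w. eta (lam f Y X t th w)) n th w\<bar>) \<longlonglongrightarrow> 0"
    proof (rule tendsto_sandwich[where f="\<lambda>_. 0" and h="\<lambda>n. ennreal ((\<Sum>t=1..n. \<beta> t) / real n)"])
      show "\<forall>\<^sub>F n in sequentially. 0 \<le> (SUP th \<in> Theta. ennreal \<bar>Hn g a Y (\<lambda>t th w. eta (lamhat f Y X t th w)) n th w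
                    - Hn g a Y (\<lambda>t th w. eta (lam f Y X t th w)) n th w\<bar>)" by simp
      show "\<forall>\<^sub>F n in sequentially. (SUP th \<in> Theta. ennreal \<bar>Hn g a Y (\<lambda>t th w. eta (lamhat f Y X t th w)) n th w
                    - Hn g a Y (\<lambda>t th w. eta (lam f Y X t th w)) n th w\<bar>) \<le> ennreal ((\<Sum>t=1..n. \<beta> t) / real n)"
        by (intro always_eventually allI SUP_least Hb)
      show "(\<lambda>n. 0) \<longlonglongrightarrow> (0::ennreal)" by simp
      show "(\<lambda>n. ennreal ((\<Sum>t=1..n. \<beta> t) / real n)) \<longlonglongrightarrow> 0"
        using tendsto_ennrealI[OF kr] by simp
    qed
  qed
qed

end
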